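(* Let $p$ be a prime and $n\ge2$, and let $l_1,\ldots,l_{n-1}$ be integers such that $l_{\alpha+\beta}\le l_\alpha+l_\beta$ for all $\alpha,\beta\ge1$ with $\alpha+\beta\le n-1$. Then $$\{B\in T_n^+(\mathbf{Q}_p): b_{j,k}\in p^{l_{k-j}}\mathbf{Z}_p\text{ when }j<k\}$$ is a compact open subring of $T_n^+(\mathbf{Q}_p)$, and $$\{A\in T^+(n,\mathbf{Q}_p): a_{j,k}\in p^{l_{k-j}}\mathbf{Z}_p\text{ when }j<k\}$$ is a compact open subgroup of $T^+(n,\mathbf{Q}_p)$. In particular $\{A\in T^+(n,\mathbf{Q}_p): \max_{j<k}|a_{j,k}|_p^{1/(k-j)}\le p^{-l}\}=\delta_{p^l}(T^+(n,\mathbf{Z}_p))$ is a compact open subgroup for each $l\in\mathbf{Z}$, and $T^+(n,\mathbf{Q}_p)$ has large compact open subgroups.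
   Context: $T_n^+(\mathbf{Q}_p)$ is the ring of strictly upper-triangular $n\times n$ matrices over $\mathbf{Q}_p$; $T^+(n,\mathbf{Q}_p)$ is the group of upper-triangular matrices with diagonal entries $1$, with the topology induced from $M_n(\mathbf{Q}_p)\cong\mathbf{Q}_p^{n^2}$; $T^+(n,\mathbf{Z}_p)$ is its subgroup with entries in $\mathbf{Z}_p$; $\delta_r$ multiplies the $(j,k)$ entry with $j<k$ by $r^{k-j}$. A topological group has large compact open subgroups if every compact subset is contained in a compact open subgroup. *)

theory Defs
  imports "HOL-Analysis.Analysis" "HOL-Algebra.Group"
begin

definition nonarch_absval :: "('a::field \<Rightarrow> real) \<Rightarrow> bool" where
  "nonarch_absval absv \<longleftrightarrow>
     (\<forall>x. absv x \<ge> 0) \<and> (\<forall>x. absv x = 0 \<longleftrightarrow> x = 0) \<and>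
     (\<forall>x y. absv (x * y) = absv x * absv y) \<and>
     (\<forall>x y. absv (x + y) \<le> max (absv x) (absv y))"

text \<open>(K, absv) is (a copy of) the field Q_p of p-adic numbers: the completion of Q
  with respect to the p-adic absolute value (normalised by |p| = 1/p).
  By Ostrowski's theorem such a field is isometrically isomorphic to Q_p.\<close>
definition padic_field :: "nat \<Rightarrow> ('a::field_char_0 \<Rightarrow> real) \<Rightarrow> bool" where
  "padic_field p absv \<longleftrightarrow>
     nonarch_absval absv \<and>
     absv (of_nat p) = 1 / real p \<and>
     (\<forall>X::nat \<Rightarrow> 'a. (\<forall>e>0. \<exists>N. \<forall>m\<ge>N. \<forall>k\<ge>N. absv (X m - X k) < e) \<longrightarrow>
          (\<exists>x. \<forall>e>0. \<exists>N. \<forall>m\<ge>N. absv (X m - x) < e)) \<and>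
     (\<forall>x e. e > 0 \<longrightarrow> (\<exists>q::rat. absv (x - of_rat q) < e))"

definition Zp :: "('a::field_char_0 \<Rightarrow> real) \<Rightarrow> 'a set" where
  "Zp absv = {x. absv x \<le> 1}"

definition pZp :: "nat \<Rightarrow> ('a::field_char_0 \<Rightarrow> real) \<Rightarrow> int \<Rightarrow> 'a set" where
  "pZp p absv l = (\<lambda>z. (of_nat p) powi l * z) ` Zp absv"

section \<open>n x n matrices, indexed by 1..n, as functions (entries outside are 0)\<close>

type_synonym 'a mat_fn = "nat \<Rightarrow> nat \<Rightarrow> 'a"

definition Mn :: "nat \<Rightarrow> ('a::zero) mat_fn set" where
  "Mn n = {A. \<forall>j k. A j k \<noteq> 0 \<longrightarrow> j \<in> {1..n} \<and> k \<in> {1..n}}"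

definition Tn_plus :: "nat \<Rightarrow> ('a::zero) mat_fn set" where
  "Tn_plus n = {B. \<forall>j k. B j k \<noteq> 0 \<longrightarrow> 1 \<le> j \<and> j < k \<and> k \<le> n}"

definition T_plus :: "nat \<Rightarrow> ('a::{zero,one}) mat_fn set" where
  "T_plus n = {A. \<forall>j k. A j k =
      (if j = k \<and> 1 \<le> j \<and> j \<le> n then 1
       else if 1 \<le> j \<and> j < k \<and> k \<le> n then A j k else 0)}"

definition mat_mult :: "nat \<Rightarrow> ('a::comm_ring_1) mat_fn \<Rightarrow> 'a mat_fn \<Rightarrow> 'a mat_fn" where
  "mat_mult n A B = (\<lambda>j k. \<Sum>i\<in>{1..n}. A j i * B i k)"

definition mat_one :: "nat \<Rightarrow> ('a::comm_ring_1) mat_fn" where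
  "mat_one n = (\<lambda>j k. if j = k \<and> 1 \<le> j \<and> j \<le> n then 1 else 0)"

definition mat_add :: "('a::comm_ring_1) mat_fn \<Rightarrow> 'a mat_fn \<Rightarrow> 'a mat_fn" where
  "mat_add A B = (\<lambda>j k. A j k + B j k)"

definition mat_neg :: "('a::comm_ring_1) mat_fn \<Rightarrow> 'a mat_fn" where
  "mat_neg A = (\<lambda>j k. - A j k)"

definition T_plus_group :: "nat \<Rightarrow> ('a::comm_ring_1) mat_fn monoid" where
  "T_plus_group n = \<lparr>carrier = T_plus n, mult = mat_mult n, one = mat_one n\<rparr>"

definition is_subring_Tn :: "nat \<Rightarrow> ('a::comm_ring_1) mat_fn set \<Rightarrow> bool" where
  "is_subring_Tn n S \<longleftrightarrow> S \<subseteq> Tn_plus n \<and> (\<lambda>j k. 0) \<in> S \<and>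
     (\<forall>A\<in>S. \<forall>B\<in>S. mat_add A B \<in> S \<and> mat_mult n A B \<in> S) \<and>
     (\<forall>A\<in>S. mat_neg A \<in> S)"

section \<open>Topology: M_n(Q_p) = Q_p^(n^2) with the product topology\<close>

definition Mn_top :: "('a::field_char_0 \<Rightarrow> real) \<Rightarrow> nat \<Rightarrow> 'a mat_fn topology" where
  "Mn_top absv n = topology (\<lambda>U. U \<subseteq> Mn n \<and>
     (\<forall>A\<in>U. \<exists>e>0. \<forall>B\<in>Mn n.
        (\<forall>j\<in>{1..n}. \<forall>k\<in>{1..n}. absv (B j k - A j k) < e) \<longrightarrow> B \<in> U))"

definition Tn_plus_top :: "('a::field_char_0 \<Rightarrow> real) \<Rightarrow> nat \<Rightarrow> 'a mat_fn topology" where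
  "Tn_plus_top absv n = subtopology (Mn_top absv n) (Tn_plus n)"

definition T_plus_top :: "('a::field_char_0 \<Rightarrow> real) \<Rightarrow> nat \<Rightarrow> 'a mat_fn topology" where
  "T_plus_top absv n = subtopology (Mn_top absv n) (T_plus n)"

definition has_large_compact_open_subgroups :: "'g topology \<Rightarrow> ('g, 'b) monoid_scheme \<Rightarrow> bool" where
  "has_large_compact_open_subgroups X G \<longleftrightarrow>
     (\<forall>K. compactin X K \<longrightarrow>
        (\<exists>H. subgroup H G \<and> compactin X H \<and> openin X H \<and> K \<subseteq> H))"

definition delta :: "('a::comm_ring_1) \<Rightarrow> 'a mat_fn \<Rightarrow> 'a mat_fn" where
  "delta r A = (\<lambda>j k. if j < k then r ^ (k - j) * A j k else A j k)"

definition T_plus_Zp :: "('a::field_char_0 \<Rightarrow> real) \<Rightarrow> nat \<Rightarrow> 'a mat_fn set" where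
  "T_plus_Zp absv n = {A \<in> T_plus n. \<forall>j k. 1 \<le> j \<and> j < k \<and> k \<le> n \<longrightarrow> A j k \<in> Zp absv}"

end

theory Submission
  imports Defs
begin

definition mdist :: "('a::field_char_0 \<Rightarrow> real) \<Rightarrow> nat \<Rightarrow> 'a mat_fn \<Rightarrow> 'a mat_fn \<Rightarrow> real" where
  "mdist absv n A B = (\<Sum>j\<in>{1..n}. \<Sum>k\<in>{1..n}. absv (A j k - B j k))"

lemma Mn_zero: "A \<in> Mn n \<Longrightarrow> \<not> (j \<in> {1..n} \<and> k \<in> {1..n}) \<Longrightarrow> A j k = 0"
  unfolding Mn_def by blast

lemma Mn_ext:
  assumes "A \<in> Mn n" "B \<in> Mn n" "\<forall>j\<in>{1..n}. \<forall>k\<in>{1..n}. A j k = B j k"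
  shows "A = B"
proof (intro ext)
  fix j k
  show "A j k = B j k"
  proof (cases "j \<in> {1..n} \<and> k \<in> {1..n}")
    case True then show ?thesis using assms(3) by blast
  next
    case False then show ?thesis using Mn_zero[OF assms(1) False] Mn_zero[OF assms(2) False] by simp
  qed
qed


lemma Tn_plus_Mn: "Tn_plus n \<subseteq> Mn n"
proof
  fix A assume A: "A \<in> Tn_plus n"
  show "A \<in> Mn n" unfolding Mn_def
  proof (intro CollectI allI impI)
    fix j k assume "A j k \<noteq> 0"
    then have "1 \<le> j \<and> j < k \<and> k \<le> n" using A unfolding Tn_plus_def by blast
    then show "j \<in> {1..n} \<and> k \<in> {1..n}" by auto
  qed
qed

lemma T_plus_Mn: "T_plus n \<subseteq> Mn n"
proof
  fix A assume A: "A \<in> T_plus n"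
  show "A \<in> Mn n" unfolding Mn_def
  proof (intro CollectI allI impI)
    fix j k assume "A j k \<noteq> 0"
    moreover have "A j k = (if j = k \<and> 1 \<le> j \<and> j \<le> n then 1
       else if 1 \<le> j \<and> j < k \<and> k \<le> n then A j k else 0)" using A unfolding T_plus_def by blast
    ultimately show "j \<in> {1..n} \<and> k \<in> {1..n}" by (auto split: if_splits)
  qed
qed

section \<open>Matrix algebra\<close>

lemma mult_assoc: "mat_mult n (mat_mult n A B) C = mat_mult n A (mat_mult n B C)"
proof (intro ext)
  fix j k
  have "mat_mult n (mat_mult n A B) C j k = (\<Sum>i\<in>{1..n}. \<Sum>h\<in>{1..n}. A j h * B h i * C i k)"
    unfolding mat_mult_def by (simp add: sum_distrib_right)
  also have "\<dots> = (\<Sum>h\<in>{1..n}. \<Sum>i\<in>{1..n}. A j h * B h i * C i k)" by (rule sum.swap)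
  also have "\<dots> = mat_mult n A (mat_mult n B C) j k"
    unfolding mat_mult_def by (simp add: sum_distrib_left mult.assoc)
  finally show "mat_mult n (mat_mult n A B) C j k = mat_mult n A (mat_mult n B C) j k" .
qed

lemma add_mult: "mat_mult n (mat_add A B) C = mat_add (mat_mult n A C) (mat_mult n B C)"
  unfolding mat_mult_def mat_add_def by (simp add: distrib_right sum.distrib)

lemma mult_add: "mat_mult n A (mat_add B C) = mat_add (mat_mult n A B) (mat_mult n A C)"
  unfolding mat_mult_def mat_add_def by (simp add: distrib_left sum.distrib)

lemma neg_mult: "mat_mult n (mat_neg A) B = mat_neg (mat_mult n A B)"
  unfolding mat_mult_def mat_neg_def by (simp add: sum_negf)

lemma mult_neg: "mat_mult n A (mat_neg B) = mat_neg (mat_mult n A B)"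
  unfolding mat_mult_def mat_neg_def by (simp add: sum_negf)

lemma one_mult: assumes "A \<in> Mn n" shows "mat_mult n (mat_one n) A = A"
proof (intro ext)
  fix j k
  show "mat_mult n (mat_one n) A j k = A j k"
  proof (cases "j \<in> {1..n}")
    case True
    have "mat_mult n (mat_one n) A j k = (\<Sum>i\<in>{1..n}. if i = j then A j k else 0)"
      unfolding mat_mult_def mat_one_def by (intro sum.cong refl) (use True in auto)
    also have "\<dots> = A j k" using True by simp
    finally show ?thesis .
  next
    case False
    then have "A j k = 0" using Mn_zero[OF assms] by blast
    moreover have "mat_mult n (mat_one n) A j k = 0"
      unfolding mat_mult_def mat_one_def using False by (intro sum.neutral) auto
    ultimately show ?thesis by simp
  qed
qed

lemma mult_one: assumes "A \<in> Mn n" shows "mat_mult n A (mat_one n) = A"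
proof (intro ext)
  fix j k
  show "mat_mult n A (mat_one n) j k = A j k"
  proof (cases "k \<in> {1..n}")
    case True
    have "mat_mult n A (mat_one n) j k = (\<Sum>i\<in>{1..n}. if i = k then A j k else 0)"
      unfolding mat_mult_def mat_one_def by (intro sum.cong refl) (use True in auto)
    also have "\<dots> = A j k" using True by simp
    finally show ?thesis .
  next
    case False
    then have "A j k = 0" using Mn_zero[OF assms] by blast
    moreover have "mat_mult n A (mat_one n) j k = 0"
      unfolding mat_mult_def mat_one_def using False by (intro sum.neutral) auto
    ultimately show ?thesis by simp
  qed
qed

lemma mult_zero_left: "mat_mult n (\<lambda>j k. 0) A = (\<lambda>j k. 0)"
  unfolding mat_mult_def by simp

lemma one_Mn: "mat_one n \<in> Mn n" unfolding mat_one_def Mn_def by auto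

lemma mult_Mn: assumes "A \<in> Mn n" "B \<in> Mn n" shows "mat_mult n A B \<in> Mn n"
  unfolding Mn_def
proof (intro CollectI allI impI)
  fix j k assume nz: "mat_mult n A B j k \<noteq> 0"
  have "j \<in> {1..n}"
  proof (rule ccontr)
    assume "j \<notin> {1..n}"
    then have "\<And>i. A j i = 0" using Mn_zero[OF assms(1)] by blast
    then show False using nz unfolding mat_mult_def by simp
  qed
  moreover have "k \<in> {1..n}"
  proof (rule ccontr)
    assume "k \<notin> {1..n}"
    then have "\<And>i. B i k = 0" using Mn_zero[OF assms(2)] by blast
    then show False using nz unfolding mat_mult_def by simp
  qed
  ultimately show "j \<in> {1..n} \<and> k \<in> {1..n}" by blast
qed

lemma add_Mn: assumes "A \<in> Mn n" "B \<in> Mn n" shows "mat_add A B \<in> Mn n"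
  unfolding Mn_def mat_add_def
proof (intro CollectI allI impI)
  fix j k assume "A j k + B j k \<noteq> 0"
  then have "A j k \<noteq> 0 \<or> B j k \<noteq> 0" by auto
  then show "j \<in> {1..n} \<and> k \<in> {1..n}" using assms unfolding Mn_def by blast
qed

lemma neg_Mn: "A \<in> Mn n \<Longrightarrow> mat_neg A \<in> Mn n"
  unfolding Mn_def mat_neg_def by auto

primrec mpow :: "nat \<Rightarrow> ('a::comm_ring_1) mat_fn \<Rightarrow> nat \<Rightarrow> 'a mat_fn" where
  "mpow n M 0 = mat_one n"
| "mpow n M (Suc m) = mat_mult n M (mpow n M m)"

lemma mpow_Mn: "M \<in> Mn n \<Longrightarrow> mpow n M m \<in> Mn n"
  by (induction m) (simp_all add: one_Mn mult_Mn)

lemma mpow_commute: assumes "M \<in> Mn n" shows "mat_mult n (mpow n M m) M = mpow n M (Suc m)"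
proof (induction m)
  case 0 then show ?case using assms by (simp add: one_mult mult_one)
next
  case (Suc m)
  have "mat_mult n (mpow n M (Suc m)) M = mat_mult n M (mat_mult n (mpow n M m) M)"
    by (simp add: mult_assoc)
  also have "\<dots> = mpow n M (Suc (Suc m))" using Suc by simp
  finally show ?case .
qed

definition msum :: "nat \<Rightarrow> ('a::comm_ring_1) mat_fn \<Rightarrow> nat \<Rightarrow> 'a mat_fn" where
  "msum n M m = (\<lambda>j k. \<Sum>i<m. mpow n M i j k)"

lemma mult_msum_right: "mat_mult n X (msum n M m) = (\<lambda>j k. \<Sum>i<m. mat_mult n X (mpow n M i) j k)"
proof (intro ext)
  fix j k
  have "mat_mult n X (msum n M m) j k = (\<Sum>h\<in>{1..n}. \<Sum>i<m. X j h * mpow n M i h k)"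
    unfolding mat_mult_def msum_def by (simp add: sum_distrib_left)
  also have "\<dots> = (\<Sum>i<m. \<Sum>h\<in>{1..n}. X j h * mpow n M i h k)" by (rule sum.swap)
  finally show "mat_mult n X (msum n M m) j k = (\<Sum>i<m. mat_mult n X (mpow n M i) j k)"
    unfolding mat_mult_def .
qed

lemma mult_msum_left: "mat_mult n (msum n M m) X = (\<lambda>j k. \<Sum>i<m. mat_mult n (mpow n M i) X j k)"
proof (intro ext)
  fix j k
  have "mat_mult n (msum n M m) X j k = (\<Sum>h\<in>{1..n}. \<Sum>i<m. mpow n M i j h * X h k)"
    unfolding mat_mult_def msum_def by (simp add: sum_distrib_right)
  also have "\<dots> = (\<Sum>i<m. \<Sum>h\<in>{1..n}. mpow n M i j h * X h k)" by (rule sum.swap)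
  finally show "mat_mult n (msum n M m) X j k = (\<Sum>i<m. mat_mult n (mpow n M i) X j k)"
    unfolding mat_mult_def .
qed

lemma neumann:
  assumes M: "M \<in> Mn n"
  shows "mat_mult n (mat_add (mat_one n) (mat_neg M)) (msum n M m) = mat_add (mat_one n) (mat_neg (mpow n M m))"
    "mat_mult n (msum n M m) (mat_add (mat_one n) (mat_neg M)) = mat_add (mat_one n) (mat_neg (mpow n M m))"
proof -
  have P: "\<And>i. mpow n M i \<in> Mn n" using mpow_Mn[OF M] .
  have h1: "\<And>i. mat_mult n (mat_add (mat_one n) (mat_neg M)) (mpow n M i) = mat_add (mpow n M i) (mat_neg (mpow n M (Suc i)))"
    by (simp add: add_mult neg_mult one_mult[OF P])
  show "mat_mult n (mat_add (mat_one n) (mat_neg M)) (msum n M m) = mat_add (mat_one n) (mat_neg (mpow n M m))"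
  proof (intro ext)
    fix j k
    have "mat_mult n (mat_add (mat_one n) (mat_neg M)) (msum n M m) j k
       = (\<Sum>i<m. mat_mult n (mat_add (mat_one n) (mat_neg M)) (mpow n M i) j k)"
      by (simp only: mult_msum_right)
    also have "\<dots> = (\<Sum>i<m. mpow n M i j k - mpow n M (Suc i) j k)"
      by (intro sum.cong refl) (subst h1, simp add: mat_add_def mat_neg_def)
    also have "\<dots> = mpow n M 0 j k - mpow n M m j k" by (rule sum_lessThan_telescope')
    also have "\<dots> = mat_add (mat_one n) (mat_neg (mpow n M m)) j k" by (simp add: mat_add_def mat_neg_def)
    finally show "mat_mult n (mat_add (mat_one n) (mat_neg M)) (msum n M m) j k = mat_add (mat_one n) (mat_neg (mpow n M m)) j k" .
  qed
  have h2: "\<And>i. mat_mult n (mpow n M i) (mat_add (mat_one n) (mat_neg M)) = mat_add (mpow n M i) (mat_neg (mpow n M (Suc i)))"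
    by (simp add: mult_add mult_neg mult_one[OF P] mpow_commute[OF M] del: mpow.simps)
  show "mat_mult n (msum n M m) (mat_add (mat_one n) (mat_neg M)) = mat_add (mat_one n) (mat_neg (mpow n M m))"
  proof (intro ext)
    fix j k
    have "mat_mult n (msum n M m) (mat_add (mat_one n) (mat_neg M)) j k
       = (\<Sum>i<m. mat_mult n (mpow n M i) (mat_add (mat_one n) (mat_neg M)) j k)"
      by (simp only: mult_msum_left)
    also have "\<dots> = (\<Sum>i<m. mpow n M i j k - mpow n M (Suc i) j k)"
      by (intro sum.cong refl) (subst h2, simp add: mat_add_def mat_neg_def)
    also have "\<dots> = mpow n M 0 j k - mpow n M m j k" by (rule sum_lessThan_telescope')
    also have "\<dots> = mat_add (mat_one n) (mat_neg (mpow n M m)) j k" by (simp add: mat_add_def mat_neg_def)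
    finally show "mat_mult n (msum n M m) (mat_add (mat_one n) (mat_neg M)) j k = mat_add (mat_one n) (mat_neg (mpow n M m)) j k" .
  qed
qed

lemma mpow_nilpotent:
  assumes N: "N \<in> Tn_plus n"
  shows "mpow n N m j i \<noteq> 0 \<Longrightarrow> j + m \<le> i \<and> 1 \<le> j \<and> i \<le> n"
proof (induction m arbitrary: j i)
  case 0 then show ?case by (simp add: mat_one_def split: if_splits)
next
  case (Suc m)
  then have "(\<Sum>h\<in>{1..n}. N j h * mpow n N m h i) \<noteq> 0" by (simp add: mat_mult_def)
  then obtain h where h: "h \<in> {1..n}" "N j h * mpow n N m h i \<noteq> 0" by (meson sum.neutral)
  then have "N j h \<noteq> 0" "mpow n N m h i \<noteq> 0" by auto
  then have "1 \<le> j \<and> j < h \<and> h \<le> n" "h + m \<le> i \<and> 1 \<le> h \<and> i \<le> n"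
    using N Suc.IH unfolding Tn_plus_def by blast+
  then show ?case by auto
qed

lemma mpow_n_zero: assumes "N \<in> Tn_plus n" shows "mpow n N n = (\<lambda>j k. 0)"
proof (intro ext)
  fix j i show "mpow n N n j i = 0"
    using mpow_nilpotent[OF assms, of n j i] by (cases "mpow n N n j i = 0") auto
qed


lemma T_plus_eq: "T_plus n = mat_add (mat_one n) ` (Tn_plus n :: ('a::comm_ring_1) mat_fn set)"
proof (intro equalityI subsetI)
  fix A :: "'a mat_fn" assume A: "A \<in> T_plus n"
  then have Ajk: "\<And>j k. A j k = (if j = k \<and> 1 \<le> j \<and> j \<le> n then 1
       else if 1 \<le> j \<and> j < k \<and> k \<le> n then A j k else 0)" unfolding T_plus_def by blast
  define N where "N = mat_add A (mat_neg (mat_one n))"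
  have "N \<in> Tn_plus n" unfolding Tn_plus_def
  proof (intro CollectI allI impI)
    fix j k assume nz: "N j k \<noteq> 0"
    show "1 \<le> j \<and> j < k \<and> k \<le> n"
    proof (rule ccontr)
      assume nu: "\<not> (1 \<le> j \<and> j < k \<and> k \<le> n)"
      have "N j k = 0"
      proof (cases "j = k \<and> 1 \<le> j \<and> j \<le> n")
        case True
        then have "A j k = 1" using Ajk[of j k] by simp
        then show ?thesis using True unfolding N_def mat_add_def mat_neg_def mat_one_def by simp
      next
        case False
        have "A j k = 0" using Ajk[of j k] by (simp only: if_not_P[OF False] if_not_P[OF nu])
        then show ?thesis using False unfolding N_def mat_add_def mat_neg_def mat_one_def by auto
      qed
      then show False using nz by simp
    qed
  qed
  moreover have "A = mat_add (mat_one n) N" unfolding N_def mat_add_def mat_neg_def by simp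
  ultimately show "A \<in> mat_add (mat_one n) ` Tn_plus n" by blast
next
  fix A :: "'a mat_fn" assume "A \<in> mat_add (mat_one n) ` Tn_plus n"
  then obtain N where N: "N \<in> Tn_plus n" "A = mat_add (mat_one n) N" by blast
  have Nz: "\<And>j k. \<not> (1 \<le> j \<and> j < k \<and> k \<le> n) \<Longrightarrow> N j k = 0" using N(1) unfolding Tn_plus_def by blast
  show "A \<in> T_plus n" unfolding T_plus_def
  proof (intro CollectI allI)
    fix j k
    show "A j k = (if j = k \<and> 1 \<le> j \<and> j \<le> n then 1
       else if 1 \<le> j \<and> j < k \<and> k \<le> n then A j k else 0)"
    proof (cases "j = k \<and> 1 \<le> j \<and> j \<le> n")
      case True
      then show ?thesis using Nz[of j k] unfolding N(2) mat_add_def mat_one_def by simp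
    next
      case False
      show ?thesis
      proof (cases "1 \<le> j \<and> j < k \<and> k \<le> n")
        case True then show ?thesis using False by simp
      next
        case False2: False
        then show ?thesis using False Nz[OF False2] unfolding N(2) mat_add_def mat_one_def by auto
      qed
    qed
  qed
qed

lemma Tn_plus_subring: "is_subring_Tn n (Tn_plus n :: ('a::comm_ring_1) mat_fn set)"
  unfolding is_subring_Tn_def
proof (intro conjI ballI subset_refl)
  show "(\<lambda>j k. 0) \<in> (Tn_plus n :: 'a mat_fn set)" unfolding Tn_plus_def by simp
  fix A B :: "'a mat_fn" assume A: "A \<in> Tn_plus n" and B: "B \<in> Tn_plus n"
  show "mat_add A B \<in> Tn_plus n" unfolding Tn_plus_def
  proof (intro CollectI allI impI)
    fix j k assume "mat_add A B j k \<noteq> 0"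
    then have "A j k \<noteq> 0 \<or> B j k \<noteq> 0" unfolding mat_add_def by auto
    then show "1 \<le> j \<and> j < k \<and> k \<le> n" using A B unfolding Tn_plus_def by blast
  qed
  show "mat_mult n A B \<in> Tn_plus n" unfolding Tn_plus_def
  proof (intro CollectI allI impI)
    fix j k assume "mat_mult n A B j k \<noteq> 0"
    then obtain h where "h \<in> {1..n}" "A j h * B h k \<noteq> 0" unfolding mat_mult_def by (meson sum.neutral)
    then have "A j h \<noteq> 0" "B h k \<noteq> 0" by auto
    then have "1 \<le> j \<and> j < h \<and> h \<le> n" "1 \<le> h \<and> h < k \<and> k \<le> n" using A B unfolding Tn_plus_def by blast+
    then show "1 \<le> j \<and> j < k \<and> k \<le> n" by auto
  qed
next
  fix A :: "'a mat_fn" assume A: "A \<in> Tn_plus n"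
  show "mat_neg A \<in> Tn_plus n" using A unfolding Tn_plus_def mat_neg_def by auto
qed

lemma subring_Mn: "is_subring_Tn n R \<Longrightarrow> R \<subseteq> Mn n"
  unfolding is_subring_Tn_def using Tn_plus_Mn by blast

lemma closed_R:
  assumes R: "is_subring_Tn n R" and A: "A \<in> mat_add (mat_one n) ` R" and B: "B \<in> mat_add (mat_one n) ` R"
  shows "mat_mult n A B \<in> mat_add (mat_one n) ` R"
proof -
  obtain N where N: "N \<in> R" "A = mat_add (mat_one n) N" using A by blast
  obtain N' where N': "N' \<in> R" "B = mat_add (mat_one n) N'" using B by blast
  have NM: "N \<in> Mn n" "N' \<in> Mn n" using N(1) N'(1) subring_Mn[OF R] by auto
  have BM: "B \<in> Mn n" unfolding N'(2) by (intro add_Mn one_Mn NM)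
  have "mat_mult n A B = mat_add B (mat_mult n N B)"
    unfolding N(2) add_mult one_mult[OF BM] ..
  also have "mat_mult n N B = mat_add N (mat_mult n N N')"
    unfolding N'(2) mult_add mult_one[OF NM(1)] ..
  finally have "mat_mult n A B = mat_add (mat_one n) (mat_add N' (mat_add N (mat_mult n N N')))"
    unfolding N'(2) by (simp add: mat_add_def add.assoc)
  moreover have "mat_add N' (mat_add N (mat_mult n N N')) \<in> R"
    using R N(1) N'(1) unfolding is_subring_Tn_def by blast
  ultimately show ?thesis by blast
qed

lemma one_R: "is_subring_Tn n R \<Longrightarrow> mat_one n \<in> mat_add (mat_one n) ` R"
proof -
  assume "is_subring_Tn n R"
  then have "(\<lambda>j k. 0) \<in> R" unfolding is_subring_Tn_def by blast
  moreover have "mat_one n = mat_add (mat_one n) (\<lambda>j k. 0)" by (simp add: mat_add_def)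
  ultimately show ?thesis by blast
qed

lemma mpow_R: assumes R: "is_subring_Tn n R" and M: "M \<in> R" shows "mpow n M (Suc m) \<in> R"
proof (induction m)
  case 0
  have "M \<in> Mn n" using subring_Mn[OF R] M by blast
  then show ?case using M by (simp add: mult_one)
next
  case (Suc m)
  then show ?case using R M unfolding is_subring_Tn_def by (simp del: mpow.simps add: mpow.simps(2)[of n M "Suc m"])
qed

lemma msum_R: assumes R: "is_subring_Tn n R" and M: "M \<in> R" shows "msum n M (Suc m) \<in> mat_add (mat_one n) ` R"
proof (induction m)
  case 0
  have "msum n M (Suc 0) = mat_one n" unfolding msum_def by simp
  then show ?case using one_R[OF R] by simp
next
  case (Suc m)
  then obtain Q where Q: "Q \<in> R" "msum n M (Suc m) = mat_add (mat_one n) Q" by blast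
  have "msum n M (Suc (Suc m)) = mat_add (msum n M (Suc m)) (mpow n M (Suc m))"
    unfolding msum_def mat_add_def by (simp del: mpow.simps)
  also have "\<dots> = mat_add (mat_one n) (mat_add Q (mpow n M (Suc m)))"
    unfolding Q(2) by (simp add: mat_add_def add.assoc)
  finally show ?case using Q(1) mpow_R[OF R M, of m] R unfolding is_subring_Tn_def by blast
qed

lemma inv_R:
  assumes R: "is_subring_Tn n R" and n: "n \<ge> 1" and A: "A \<in> mat_add (mat_one n) ` R"
  shows "\<exists>Y\<in>mat_add (mat_one n) ` R. mat_mult n A Y = mat_one n \<and> mat_mult n Y A = mat_one n"
proof -
  obtain N where N: "N \<in> R" "A = mat_add (mat_one n) N" using A by blast
  define M where "M = mat_neg N"
  have MR: "M \<in> R" unfolding M_def using R N(1) unfolding is_subring_Tn_def by blast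
  have MT: "M \<in> Tn_plus n" using MR R unfolding is_subring_Tn_def by blast
  have MM: "M \<in> Mn n" using MT Tn_plus_Mn by blast
  have AM: "A = mat_add (mat_one n) (mat_neg M)" unfolding N(2) M_def mat_neg_def by simp
  have I: "mat_add (mat_one n) (mat_neg (mpow n M n)) = mat_one n"
    unfolding mpow_n_zero[OF MT] by (simp add: mat_add_def mat_neg_def)
  obtain n' where n': "n = Suc n'" using n by (cases n) auto
  have "msum n M n \<in> mat_add (mat_one n) ` R" unfolding n' using msum_R[OF R MR] n' by simp
  moreover have "mat_mult n A (msum n M n) = mat_one n" "mat_mult n (msum n M n) A = mat_one n"
    unfolding AM neumann[OF MM] I by simp_all
  ultimately show ?thesis by blast
qed

lemma carrier_G: "carrier (T_plus_group n) = T_plus n"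
  and mult_G: "mult (T_plus_group n) = mat_mult n"
  and one_G: "one (T_plus_group n) = mat_one n"
  unfolding T_plus_group_def by simp_all

lemma monoid_G: "monoid (T_plus_group n :: ('a::comm_ring_1) mat_fn monoid)"
proof (rule monoidI, unfold carrier_G mult_G one_G)
  fix x y :: "'a mat_fn" assume "x \<in> T_plus n" "y \<in> T_plus n"
  then show "mat_mult n x y \<in> T_plus n" unfolding T_plus_eq by (rule closed_R[OF Tn_plus_subring])
next
  show "mat_one n \<in> (T_plus n :: 'a mat_fn set)" unfolding T_plus_eq by (rule one_R[OF Tn_plus_subring])
next
  fix x y z :: "'a mat_fn"
  show "mat_mult n (mat_mult n x y) z = mat_mult n x (mat_mult n y z)" by (rule mult_assoc)
next
  fix x :: "'a mat_fn" assume "x \<in> T_plus n"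
  then have "x \<in> Mn n" using T_plus_Mn by blast
  then show "mat_mult n (mat_one n) x = x" "mat_mult n x (mat_one n) = x" by (simp_all add: one_mult mult_one)
qed

lemma subgroup_R:
  assumes R: "is_subring_Tn n R" and n: "n \<ge> 1"
  shows "subgroup (mat_add (mat_one n) ` R) (T_plus_group n)"
proof
  interpret G: monoid "T_plus_group n" by (rule monoid_G)
  have sub: "mat_add (mat_one n) ` R \<subseteq> T_plus n"
    unfolding T_plus_eq using R unfolding is_subring_Tn_def by blast
  then show "mat_add (mat_one n) ` R \<subseteq> carrier (T_plus_group n)" unfolding carrier_G .
  fix x y assume x: "x \<in> mat_add (mat_one n) ` R"
  {
    assume y: "y \<in> mat_add (mat_one n) ` R"
    show "x \<otimes>\<^bsub>T_plus_group n\<^esub> y \<in> mat_add (mat_one n) ` R" unfolding mult_G by (rule closed_R[OF R x y])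
  }
  obtain Y where Y: "Y \<in> mat_add (mat_one n) ` R" "mat_mult n x Y = mat_one n" "mat_mult n Y x = mat_one n"
    using inv_R[OF R n x] by blast
  have "Y = inv\<^bsub>T_plus_group n\<^esub> x"
    by (rule G.inv_unique') (use Y x sub in \<open>auto simp: carrier_G mult_G one_G\<close>)
  then show "inv\<^bsub>T_plus_group n\<^esub> x \<in> mat_add (mat_one n) ` R" using Y(1) by simp
next
  show "\<one>\<^bsub>T_plus_group n\<^esub> \<in> mat_add (mat_one n) ` R" unfolding one_G by (rule one_R[OF R])
qed

locale pad =
  fixes p :: nat and absv :: "'a::field_char_0 \<Rightarrow> real"
  assumes prime_p: "prime p" and padic: "padic_field p absv"
begin

lemma na: "nonarch_absval absv" using padic by (simp add: padic_field_def)

lemma nonneg[simp]: "absv x \<ge> 0" using na by (simp add: nonarch_absval_def)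
lemma zero_iff[simp]: "absv x = 0 \<longleftrightarrow> x = 0" using na by (simp add: nonarch_absval_def)
lemma mult: "absv (x * y) = absv x * absv y" using na by (simp add: nonarch_absval_def)
lemma ultra: "absv (x + y) \<le> max (absv x) (absv y)" using na by (simp add: nonarch_absval_def)
lemma absp: "absv (of_nat p) = 1 / real p" using padic by (simp add: padic_field_def)
lemma p_gt1: "p > 1" using prime_p prime_gt_1_nat by blast

lemma abs0[simp]: "absv 0 = 0" by simp

lemma one[simp]: "absv 1 = 1"
proof -
  have "absv 1 = absv 1 * absv 1" using mult[of 1 1] by simp
  moreover have "absv 1 \<noteq> 0" by simp
  ultimately show ?thesis by (metis mult_cancel_left2)
qed

lemma minus_one[simp]: "absv (-1) = 1"
proof -
  have h: "absv (-1) * absv (-1) = 1" using mult[of "-1" "-1"] by simp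
  have "(absv (-1) - 1) * (absv (-1) + 1) = 0" by (simp add: algebra_simps h)
  moreover have "absv (-1) + 1 > 0" using nonneg[of "-1"] by linarith
  ultimately show ?thesis by simp
qed

lemma minus[simp]: "absv (- x) = absv x"
  using mult[of "-1" x] by simp

lemma commute: "absv (x - y) = absv (y - x)"
  by (metis minus minus_diff_eq)

lemma tri: "absv (x + y) \<le> absv x + absv y"
  using ultra[of x y] nonneg[of x] nonneg[of y] by linarith

lemma ultra_diff: "absv (x - z) \<le> max (absv (x - y)) (absv (y - z))"
  using ultra[of "x - y" "y - z"] by simp

lemma tri_diff: "absv (x - z) \<le> absv (x - y) + absv (y - z)"
  using tri[of "x - y" "y - z"] by simp

lemma inverse: "absv (inverse x) = inverse (absv x)"
proof (cases "x = 0")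
  case False
  then have h: "absv x * absv (inverse x) = 1" using mult[of x "inverse x"] by simp
  show ?thesis by (rule inverse_unique[OF h, symmetric])
qed simp

lemma power: "absv (x ^ k) = absv x ^ k"
  by (induction k) (simp_all add: mult)

lemma power_int: "absv (x powi k) = absv x powi k"
  by (cases "k \<ge> 0") (simp_all add: power_int_def power inverse)

lemma of_nat_le1: "absv (of_nat k) \<le> 1"
proof (induction k)
  case (Suc k)
  then show ?case using ultra[of "of_nat k" 1] by (simp add: add.commute)
qed simp

lemma of_int_le1: "absv (of_int k) \<le> 1"
proof (cases "k \<ge> 0")
  case True
  then show ?thesis using of_nat_le1[of "nat k"] by (simp add: of_nat_nat)
next
  case False
  then have "(of_int k :: 'a) = - of_nat (nat (- k))" by (simp add: of_nat_nat)
  then show ?thesis using of_nat_le1[of "nat (-k)"] by simp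
qed

lemma of_int_coprime: assumes "\<not> int p dvd k" shows "absv (of_int k) = 1"
proof -
  have "coprime (int p) k" using assms prime_p
    by (simp add: prime_imp_coprime prime_nat_iff_prime)
  then obtain u v where uv: "u * int p + v * k = 1"
    by (metis bezout_int coprime_iff_gcd_eq_1)
  have "1 = absv (of_int (u * int p + v * k))" by (simp add: uv)
  also have "\<dots> \<le> max (absv (of_int u * of_nat p)) (absv (of_int v * of_int k))"
    using ultra by simp
  also have "\<dots> \<le> max (1 / real p) (absv (of_int k))"
  proof (rule max.mono)
    show "absv (of_int u * of_nat p) \<le> 1 / real p"
      unfolding mult absp using of_int_le1[of u] by (simp add: divide_right_mono)
    show "absv (of_int v * of_int k) \<le> absv (of_int k)"
      unfolding mult using of_int_le1[of v] by (simp add: mult_left_le_one_le)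
  qed
  finally have "1 \<le> max (1 / real p) (absv (of_int k))" .
  moreover have "1 / real p < 1" using p_gt1 by simp
  ultimately show ?thesis using of_int_le1[of k] by linarith
qed

lemma absp_powi: "absv ((of_nat p) powi L) = real p powr (- real_of_int L)"
proof -
  have "absv ((of_nat p) powi L) = inverse (real p) powi L"
    by (simp add: power_int absp inverse_eq_divide)
  also have "\<dots> = real p powi (-L)" by (simp add: power_int_inverse power_int_minus)
  also have "\<dots> = real p powr (- real_of_int L)"
    using p_gt1 powr_real_of_int'[of "real p" "-L"] by simp
  finally show ?thesis .
qed

lemma p_powi_nz: "(of_nat p :: 'a) powi L \<noteq> 0" using p_gt1 by simp

lemma pZp_iff: "x \<in> pZp p absv L \<longleftrightarrow> absv x \<le> real p powr (- real_of_int L)"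
proof
  assume "x \<in> pZp p absv L"
  then obtain z where z: "absv z \<le> 1" "x = of_nat p powi L * z" by (auto simp: pZp_def Zp_def)
  then show "absv x \<le> real p powr (- real_of_int L)"
    by (simp add: mult absp_powi mult_left_le)
next
  assume a: "absv x \<le> real p powr (- real_of_int L)"
  define z where "z = of_nat p powi (-L) * x"
  have "of_nat p powi L * z = x" unfolding z_def power_int_minus using p_powi_nz[of L]
    by (simp add: field_simps)
  moreover have "absv z \<le> 1"
  proof -
    have "absv z = real p powr real_of_int L * absv x" unfolding z_def mult absp_powi by simp
    also have "\<dots> \<le> real p powr real_of_int L * real p powr (- real_of_int L)"
      using a by (simp add: mult_left_mono)
    also have "\<dots> = 1" using p_gt1 by (simp add: powr_add[symmetric])
    finally show ?thesis .
  qed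
  ultimately show "x \<in> pZp p absv L" unfolding pZp_def Zp_def by force
qed

lemma dense: "e > 0 \<Longrightarrow> \<exists>q::rat. absv (x - of_rat q) < e"
  using padic by (simp add: padic_field_def)

lemma complete:
  fixes X :: "nat \<Rightarrow> 'a"
  assumes a: "(\<forall>e>0. \<exists>N. \<forall>m\<ge>N. \<forall>k\<ge>N. absv (X m - X k) < e)"
  shows "(\<exists>x. \<forall>e>0. \<exists>N. \<forall>m\<ge>N. absv (X m - x) < e)"
proof -
  have h: "\<forall>X::nat\<Rightarrow>'a. (\<forall>e>0. \<exists>N. \<forall>m\<ge>N. \<forall>k\<ge>N. absv (X m - X k) < e) \<longrightarrow>
          (\<exists>x. \<forall>e>0. \<exists>N. \<forall>m\<ge>N. absv (X m - x) < e)"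
    using padic unfolding padic_field_def
    apply (elim conjE)
    apply assumption
    done
  show ?thesis using mp[OF spec[OF h, of X] a] .
qed

lemma approx:
  assumes z: "absv z \<le> 1"
  shows "\<exists>m < p ^ N. absv (z - of_nat m) \<le> (1 / real p) ^ N"
proof -
  have epos: "(1 / real p) ^ N > 0" using p_gt1 by simp
  have ele1: "(1 / real p) ^ N \<le> 1" using p_gt1 by (simp add: power_le_one)
  obtain q :: rat where q: "absv (z - of_rat q) < (1 / real p) ^ N" using dense[OF epos] by blast
  have qle: "absv (of_rat q :: 'a) \<le> 1"
  proof -
    have "absv (of_rat q :: 'a) = absv (z + - (z - of_rat q))" by simp
    also have "\<dots> \<le> max (absv z) (absv (z - of_rat q))" using ultra[of z "- (z - of_rat q)"] commute[of "of_rat q" z] by simp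
    finally show ?thesis using z q ele1 by linarith
  qed
  obtain a b where ab: "quotient_of q = (a, b)" by (cases "quotient_of q")
  have bpos: "b > 0" using ab quotient_of_denom_pos by blast
  have cop: "coprime a b" using ab quotient_of_coprime by blast
  have qab: "(of_rat q :: 'a) = of_int a / of_int b"
    using quotient_of_div[OF ab] by (simp add: of_rat_divide)
  have bnz: "(of_int b :: 'a) \<noteq> 0" using bpos by simp
  have ndvd: "\<not> int p dvd b"
  proof
    assume "int p dvd b"
    then obtain b' where b': "b = int p * b'" by blast
    have "\<not> int p dvd a"
    proof
      assume "int p dvd a"
      with \<open>int p dvd b\<close> cop have "is_unit (int p)" using coprime_common_divisor by blast
      then show False using p_gt1 by simp
    qed
    then have a1: "absv (of_int a :: 'a) = 1" by (rule of_int_coprime)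
    have "absv (of_int b :: 'a) = 1 / real p * absv (of_int b' :: 'a)"
      unfolding b' by (simp add: mult absp)
    also have "\<dots> \<le> 1 / real p" using of_int_le1[of b'] by (simp add: divide_right_mono)
    finally have bs: "absv (of_int b :: 'a) \<le> 1 / real p" .
    have bp: "absv (of_int b :: 'a) > 0" using bnz nonneg[of "of_int b"] zero_iff[of "of_int b"] by linarith
    have "absv (of_rat q :: 'a) = 1 / absv (of_int b :: 'a)"
      unfolding qab divide_inverse mult inverse a1 by simp
    also have "\<dots> \<ge> 1 / (1 / real p)"
      by (rule divide_left_mono[OF bs]) (use bp p_gt1 in auto)
    also have "1 / (1 / real p) = real p" by simp
    finally have "absv (of_rat q :: 'a) \<ge> real p" .
    with qle p_gt1 show False by simp
  qed
  then have b1: "absv (of_int b :: 'a) = 1" by (rule of_int_coprime)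
  define P where "P = int p ^ N"
  have "coprime P b" unfolding P_def using ndvd prime_p
    by (simp add: prime_imp_coprime prime_nat_iff_prime coprime_power_left_iff)
  then obtain u c where uc: "u * P + c * b = 1" by (metis bezout_int coprime_iff_gcd_eq_1)
  define m where "m = nat ((a * c) mod P)"
  have Ppos: "P > 0" unfolding P_def using p_gt1 by simp
  have m_int: "int m = (a * c) mod P" unfolding m_def using Ppos by simp
  have "int m < P" using m_int pos_mod_bound[OF Ppos] by simp
  then have "int m < int (p ^ N)" by (simp add: P_def)
  then have mlt: "m < p ^ N" by (simp only: of_nat_less_iff)
  have key: "a - b * int m = P * (a * u + b * ((a * c) div P))"
  proof -
    have "(a * c) mod P = a * c - P * ((a * c) div P)" by (simp add: minus_div_mult_eq_mod[symmetric] mult.commute)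
    then have "a - b * int m = a - b * (a * c - P * ((a * c) div P))" by (simp add: m_int)
    also have "\<dots> = a * (1 - c * b) + b * P * ((a * c) div P)" by (simp add: algebra_simps)
    also have "\<dots> = P * (a * u + b * ((a * c) div P))"
    proof -
      have "1 - c * b = u * P" using uc by linarith
      then have "a * (1 - c * b) = a * (u * P)" by simp
      then show ?thesis by (simp add: algebra_simps)
    qed
    finally show ?thesis .
  qed
  have "(of_rat q :: 'a) - of_nat m = of_int (a - b * int m) / of_int b"
    unfolding qab using bnz by (simp add: field_simps)
  also have "\<dots> = of_int P * of_int (a * u + b * ((a * c) div P)) / of_int b"
    unfolding key by simp
  finally have "absv ((of_rat q :: 'a) - of_nat m) = absv (of_int P :: 'a) * absv (of_int (a * u + b * ((a * c) div P)) :: 'a)"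
    by (simp add: divide_inverse mult inverse b1)
  also have "\<dots> \<le> absv (of_int P :: 'a)"
    using of_int_le1[of "a * u + b * ((a * c) div P)"] nonneg[of "of_int P"] by (rule mult_left_le)
  also have "absv (of_int P :: 'a) = (1 / real p) ^ N" unfolding P_def by (simp add: power absp)
  finally have qm: "absv ((of_rat q :: 'a) - of_nat m) \<le> (1 / real p) ^ N" .
  have "absv (z - of_nat m) \<le> max (absv (z - of_rat q)) (absv (of_rat q - of_nat m))"
    by (rule ultra_diff)
  with q qm have "absv (z - of_nat m) \<le> (1 / real p) ^ N" by linarith
  with mlt show ?thesis by blast
qed

lemma entry_le_mdist:
  assumes "j \<in> {1..n}" "k \<in> {1..n}"
  shows "absv (A j k - B j k) \<le> mdist absv n A B"
proof -
  have "absv (A j k - B j k) \<le> (\<Sum>k\<in>{1..n}. absv (A j k - B j k))"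
    by (rule member_le_sum) (use assms in auto)
  also have "\<dots> \<le> mdist absv n A B" unfolding mdist_def
    by (rule member_le_sum[where f = "\<lambda>j. \<Sum>k\<in>{1..n}. absv (A j k - B j k)"])
       (use assms in \<open>auto intro: sum_nonneg\<close>)
  finally show ?thesis .
qed

lemma mdist_le:
  assumes "\<forall>j\<in>{1..n}. \<forall>k\<in>{1..n}. absv (A j k - B j k) \<le> \<delta>"
  shows "mdist absv n A B \<le> real n * real n * \<delta>"
proof -
  have "\<And>j. j \<in> {1..n} \<Longrightarrow> (\<Sum>k\<in>{1..n}. absv (A j k - B j k)) \<le> real n * \<delta>"
    using sum_bounded_above[of "{1..n}" "\<lambda>k. absv (A _ k - B _ k)" \<delta>] assms by auto
  then have "mdist absv n A B \<le> of_nat (card {1..n}) * (real n * \<delta>)"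
    unfolding mdist_def by (rule sum_bounded_above)
  then show ?thesis by simp
qed

lemma small_lt: assumes "r > 0" shows "real n * real n * (r / (real n * real n + 1)) < r"
proof -
  have "real n * real n * (r / (real n * real n + 1)) = r * (real n * real n / (real n * real n + 1))"
    by simp
  also have "\<dots> < r * 1"
  proof (intro mult_strict_left_mono assms)
    have pos: "0 < real n * real n + 1" by (intro add_nonneg_pos) auto
    then show "real n * real n / (real n * real n + 1) < 1" by (simp add: divide_less_eq)
  qed
  finally show ?thesis by simp
qed

lemma metric: "Metric_space (Mn n) (mdist absv n)"
proof
  fix x y :: "'a mat_fn"
  show "0 \<le> mdist absv n x y" unfolding mdist_def by (intro sum_nonneg) simp
  show "mdist absv n x y = mdist absv n y x" unfolding mdist_def by (intro sum.cong refl commute)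
  assume xy: "x \<in> Mn n" "y \<in> Mn n"
  show "mdist absv n x y = 0 \<longleftrightarrow> x = y"
  proof
    assume d0: "mdist absv n x y = 0"
    have "\<forall>j\<in>{1..n}. \<forall>k\<in>{1..n}. x j k = y j k"
    proof (intro ballI)
      fix j k assume jk: "j \<in> {1..n}" "k \<in> {1..n}"
      then have "absv (x j k - y j k) \<le> 0" using entry_le_mdist[OF jk, of x y] d0 by simp
      then show "x j k = y j k" using nonneg[of "x j k - y j k"] zero_iff[of "x j k - y j k"] by simp
    qed
    then show "x = y" using Mn_ext xy by blast
  qed (simp add: mdist_def)
next
  fix x y z :: "'a mat_fn"
  have "mdist absv n x z \<le> (\<Sum>j\<in>{1..n}. \<Sum>k\<in>{1..n}. absv (x j k - y j k) + absv (y j k - z j k))"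
    unfolding mdist_def by (intro sum_mono tri_diff)
  also have "\<dots> = mdist absv n x y + mdist absv n y z" by (simp add: mdist_def sum.distrib)
  finally show "mdist absv n x z \<le> mdist absv n x y + mdist absv n y z" .
qed

lemma openin_Mn: "openin (Mn_top absv n) U \<longleftrightarrow> U \<subseteq> Mn n \<and>
     (\<forall>A\<in>U. \<exists>e>0. \<forall>B\<in>Mn n. (\<forall>j\<in>{1..n}. \<forall>k\<in>{1..n}. absv (B j k - A j k) < e) \<longrightarrow> B \<in> U)"
proof -
  let ?P = "\<lambda>U. U \<subseteq> Mn n \<and>
     (\<forall>A\<in>U. \<exists>e>0. \<forall>B\<in>Mn n. (\<forall>j\<in>{1..n}. \<forall>k\<in>{1..n}. absv (B j k - A j k) < e) \<longrightarrow> B \<in> U)"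
  have ist: "istopology ?P" unfolding istopology_def
  proof (rule conjI; intro allI impI)
    fix S T assume S: "?P S" and T: "?P T"
    have sub: "S \<inter> T \<subseteq> Mn n" using S by blast
    have "\<forall>A\<in>S \<inter> T. \<exists>e>0. \<forall>B\<in>Mn n. (\<forall>j\<in>{1..n}. \<forall>k\<in>{1..n}. absv (B j k - A j k) < e) \<longrightarrow> B \<in> S \<inter> T"
    proof
      fix A assume A: "A \<in> S \<inter> T"
      obtain e1 where e1: "e1 > 0" "\<forall>B\<in>Mn n. (\<forall>j\<in>{1..n}. \<forall>k\<in>{1..n}. absv (B j k - A j k) < e1) \<longrightarrow> B \<in> S"
        using S A by blast
      obtain e2 where e2: "e2 > 0" "\<forall>B\<in>Mn n. (\<forall>j\<in>{1..n}. \<forall>k\<in>{1..n}. absv (B j k - A j k) < e2) \<longrightarrow> B \<in> T"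
        using T A by blast
      show "\<exists>e>0. \<forall>B\<in>Mn n. (\<forall>j\<in>{1..n}. \<forall>k\<in>{1..n}. absv (B j k - A j k) < e) \<longrightarrow> B \<in> S \<inter> T"
        by (rule exI[of _ "min e1 e2"]) (use e1 e2 in auto)
    qed
    then show "?P (S \<inter> T)" by (rule conjI[OF sub])
  next
    fix K assume K: "\<forall>S\<in>K. ?P S"
    have sub: "\<Union>K \<subseteq> Mn n" using K by blast
    have "\<forall>A\<in>\<Union>K. \<exists>e>0. \<forall>B\<in>Mn n. (\<forall>j\<in>{1..n}. \<forall>k\<in>{1..n}. absv (B j k - A j k) < e) \<longrightarrow> B \<in> \<Union>K"
    proof
      fix A assume "A \<in> \<Union>K"
      then obtain S where S: "S \<in> K" "A \<in> S" by blast
      then obtain e where e: "e > 0" "\<forall>B\<in>Mn n. (\<forall>j\<in>{1..n}. \<forall>k\<in>{1..n}. absv (B j k - A j k) < e) \<longrightarrow> B \<in> S"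
        using K by blast
      show "\<exists>e>0. \<forall>B\<in>Mn n. (\<forall>j\<in>{1..n}. \<forall>k\<in>{1..n}. absv (B j k - A j k) < e) \<longrightarrow> B \<in> \<Union>K"
        using e S by blast
    qed
    then show "?P (\<Union>K)" by (rule conjI[OF sub])
  qed
  show ?thesis unfolding Mn_top_def topology_inverse'[OF ist] by (rule refl)
qed

lemma Mn_top_eq: "Mn_top absv n = Metric_space.mtopology (Mn n) (mdist absv n)"
proof -
  interpret M: Metric_space "Mn n" "mdist absv n" by (rule metric)
  show ?thesis unfolding topology_eq openin_Mn M.openin_mtopology
  proof (intro allI)
    fix U
    show "(U \<subseteq> Mn n \<and> (\<forall>A\<in>U. \<exists>e>0. \<forall>B\<in>Mn n. (\<forall>j\<in>{1..n}. \<forall>k\<in>{1..n}. absv (B j k - A j k) < e) \<longrightarrow> B \<in> U))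
      \<longleftrightarrow> (U \<subseteq> Mn n \<and> (\<forall>x. x \<in> U \<longrightarrow> (\<exists>r>0. M.mball x r \<subseteq> U)))"
    proof
      assume U: "U \<subseteq> Mn n \<and> (\<forall>A\<in>U. \<exists>e>0. \<forall>B\<in>Mn n. (\<forall>j\<in>{1..n}. \<forall>k\<in>{1..n}. absv (B j k - A j k) < e) \<longrightarrow> B \<in> U)"
      have "\<forall>x. x \<in> U \<longrightarrow> (\<exists>r>0. M.mball x r \<subseteq> U)"
      proof (intro allI impI)
        fix A assume "A \<in> U"
        then obtain e where e: "e > 0" "\<forall>B\<in>Mn n. (\<forall>j\<in>{1..n}. \<forall>k\<in>{1..n}. absv (B j k - A j k) < e) \<longrightarrow> B \<in> U"
          using U by blast
        have "M.mball A e \<subseteq> U"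
        proof
          fix B assume "B \<in> M.mball A e"
          then have B: "B \<in> Mn n" "mdist absv n A B < e" by auto
          have "\<forall>j\<in>{1..n}. \<forall>k\<in>{1..n}. absv (B j k - A j k) < e"
          proof (intro ballI)
            fix j k assume jk: "j \<in> {1..n}" "k \<in> {1..n}"
            show "absv (B j k - A j k) < e"
              using entry_le_mdist[OF jk, of A B] B(2) commute[of "B j k" "A j k"] by linarith
          qed
          then show "B \<in> U" using e B by blast
        qed
        then show "\<exists>r>0. M.mball A r \<subseteq> U" using e by blast
      qed
      then show "U \<subseteq> Mn n \<and> (\<forall>x. x \<in> U \<longrightarrow> (\<exists>r>0. M.mball x r \<subseteq> U))"
        using U by blast
    next
      assume U: "U \<subseteq> Mn n \<and> (\<forall>x. x \<in> U \<longrightarrow> (\<exists>r>0. M.mball x r \<subseteq> U))"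
      have "\<forall>A\<in>U. \<exists>e>0. \<forall>B\<in>Mn n. (\<forall>j\<in>{1..n}. \<forall>k\<in>{1..n}. absv (B j k - A j k) < e) \<longrightarrow> B \<in> U"
      proof
        fix A assume A: "A \<in> U"
        then obtain r where r: "r > 0" "M.mball A r \<subseteq> U" using U by blast
        define e where "e = r / (real n * real n + 1)"
        have epos: "e > 0" unfolding e_def using r by (simp add: add_nonneg_pos)
        have "\<forall>B\<in>Mn n. (\<forall>j\<in>{1..n}. \<forall>k\<in>{1..n}. absv (B j k - A j k) < e) \<longrightarrow> B \<in> U"
        proof (intro ballI impI)
          fix B assume B: "B \<in> Mn n" "\<forall>j\<in>{1..n}. \<forall>k\<in>{1..n}. absv (B j k - A j k) < e"
          have "\<forall>j\<in>{1..n}. \<forall>k\<in>{1..n}. absv (A j k - B j k) \<le> e"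
          proof (intro ballI)
            fix j k assume jk: "j \<in> {1..n}" "k \<in> {1..n}"
            show "absv (A j k - B j k) \<le> e"
              using B(2) jk commute[of "B j k" "A j k"] by force
          qed
          then have "mdist absv n A B \<le> real n * real n * e" by (rule mdist_le)
          also have "\<dots> < r" unfolding e_def by (rule small_lt[OF r(1)])
          finally have "B \<in> M.mball A r" using A U B by auto
          then show "B \<in> U" using r by blast
        qed
        then show "\<exists>e>0. \<forall>B\<in>Mn n. (\<forall>j\<in>{1..n}. \<forall>k\<in>{1..n}. absv (B j k - A j k) < e) \<longrightarrow> B \<in> U"
          using epos by blast
      qed
      then show "U \<subseteq> Mn n \<and> (\<forall>A\<in>U. \<exists>e>0. \<forall>B\<in>Mn n. (\<forall>j\<in>{1..n}. \<forall>k\<in>{1..n}. absv (B j k - A j k) < e) \<longrightarrow> B \<in> U)"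
        using U by blast
    qed
  qed
qed

lemma topspace_Mn: "topspace (Mn_top absv n) = Mn n"
proof -
  interpret M: Metric_space "Mn n" "mdist absv n" by (rule metric)
  show ?thesis unfolding Mn_top_eq by simp
qed


lemma mcomplete: "Metric_space.mcomplete (Mn n) (mdist absv n)"
proof -
  interpret M: Metric_space "Mn n" "mdist absv n" by (rule metric)
  show ?thesis unfolding M.mcomplete_def
  proof (intro allI impI)
    fix \<sigma> assume C: "M.MCauchy \<sigma>"
    have rng: "\<And>m. \<sigma> m \<in> Mn n" using C unfolding M.MCauchy_def by blast
    have cau: "\<And>e. e > 0 \<Longrightarrow> \<exists>N. \<forall>m m'. N \<le> m \<longrightarrow> N \<le> m' \<longrightarrow> mdist absv n (\<sigma> m) (\<sigma> m') < e"
      using C unfolding M.MCauchy_def by blast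
    have "\<forall>j k. \<exists>x. \<forall>e>0. \<exists>N. \<forall>m\<ge>N. absv (\<sigma> m j k - x) < e"
    proof (intro allI)
      fix j k
      show "\<exists>x. \<forall>e>0. \<exists>N. \<forall>m\<ge>N. absv (\<sigma> m j k - x) < e"
      proof (rule complete[of "\<lambda>m. \<sigma> m j k"], intro allI impI)
        fix e :: real assume e: "e > 0"
        obtain N where N: "\<forall>m m'. N \<le> m \<longrightarrow> N \<le> m' \<longrightarrow> mdist absv n (\<sigma> m) (\<sigma> m') < e"
          using cau[OF e] by blast
        show "\<exists>N. \<forall>m\<ge>N. \<forall>k'\<ge>N. absv (\<sigma> m j k - \<sigma> k' j k) < e"
        proof (intro exI allI impI)
          fix m m' assume mm: "N \<le> m" "N \<le> m'"
          show "absv (\<sigma> m j k - \<sigma> m' j k) < e"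
          proof (cases "j \<in> {1..n} \<and> k \<in> {1..n}")
            case True
            then show ?thesis using entry_le_mdist[of j n k "\<sigma> m" "\<sigma> m'"] N mm by force
          next
            case False
            then show ?thesis using Mn_zero[OF rng False] e by simp
          qed
        qed
      qed
    qed
    then obtain L where L: "\<And>j k. \<forall>e>0. \<exists>N. \<forall>m\<ge>N. absv (\<sigma> m j k - L j k) < e" by metis
    define L' where "L' = (\<lambda>j k. if j \<in> {1..n} \<and> k \<in> {1..n} then L j k else 0)"
    have L'M: "L' \<in> Mn n" unfolding L'_def Mn_def by auto
    show "\<exists>x. limitin M.mtopology \<sigma> x sequentially"
    proof (intro exI)
      show "limitin M.mtopology \<sigma> L' sequentially"
        unfolding M.limitin_metric
      proof (intro conjI allI impI L'M)
        fix \<epsilon> :: real assume eps: "\<epsilon> > 0"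
        define \<delta> where "\<delta> = \<epsilon> / (real n * real n + 1)"
        have dpos: "\<delta> > 0" unfolding \<delta>_def using eps by (simp add: add_nonneg_pos)
        have "\<forall>jk\<in>{1..n} \<times> {1..n}. eventually (\<lambda>m. absv (\<sigma> m (fst jk) (snd jk) - L' (fst jk) (snd jk)) < \<delta>) sequentially"
        proof
          fix jk assume jk: "jk \<in> {1..n} \<times> {1..n}"
          obtain N where "\<forall>m\<ge>N. absv (\<sigma> m (fst jk) (snd jk) - L (fst jk) (snd jk)) < \<delta>"
            using L dpos by blast
          then show "eventually (\<lambda>m. absv (\<sigma> m (fst jk) (snd jk) - L' (fst jk) (snd jk)) < \<delta>) sequentially"
            unfolding eventually_sequentially L'_def using jk by auto
        qed
        then have ev: "eventually (\<lambda>m. \<forall>jk\<in>{1..n} \<times> {1..n}. absv (\<sigma> m (fst jk) (snd jk) - L' (fst jk) (snd jk)) < \<delta>) sequentially"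
          by (intro eventually_ball_finite) auto
        show "eventually (\<lambda>m. \<sigma> m \<in> Mn n \<and> mdist absv n (\<sigma> m) L' < \<epsilon>) sequentially"
          using ev
        proof (rule eventually_mono)
          fix m assume m: "\<forall>jk\<in>{1..n} \<times> {1..n}. absv (\<sigma> m (fst jk) (snd jk) - L' (fst jk) (snd jk)) < \<delta>"
          have "\<forall>j\<in>{1..n}. \<forall>k\<in>{1..n}. absv (\<sigma> m j k - L' j k) \<le> \<delta>"
          proof (intro ballI)
            fix j k assume "j \<in> {1..n}" "k \<in> {1..n}"
            then have "(j, k) \<in> {1..n} \<times> {1..n}" by simp
            from m[rule_format, OF this] show "absv (\<sigma> m j k - L' j k) \<le> \<delta>" by simp
          qed
          then have "mdist absv n (\<sigma> m) L' \<le> real n * real n * \<delta>" by (rule mdist_le)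
          also have "\<dots> < \<epsilon>" unfolding \<delta>_def by (rule small_lt[OF eps])
          finally show "\<sigma> m \<in> Mn n \<and> mdist absv n (\<sigma> m) L' < \<epsilon>" using rng by blast
        qed
      qed
    qed
  qed
qed

lemma compactin_Mn:
  assumes "S \<subseteq> Mn n" "closedin (Mn_top absv n) S" "Metric_space.mtotally_bounded (Mn n) (mdist absv n) S"
  shows "compactin (Mn_top absv n) S"
proof -
  interpret M: Metric_space "Mn n" "mdist absv n" by (rule metric)
  interpret Sub: Submetric "Mn n" "mdist absv n" S
    by (simp add: Submetric_def Submetric_axioms_def metric assms(1))
  have clo: "closedin M.mtopology S" using assms(2) by (simp add: Mn_top_eq)
  have "Sub.sub.mcomplete" by (rule Sub.closedin_mcomplete_imp_mcomplete[OF clo mcomplete])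
  moreover have "Sub.sub.mtotally_bounded S" using assms(3) M.mtotally_bounded_absolute by blast
  ultimately have "compact_space Sub.sub.mtopology"
    using Sub.sub.compact_space_eq_mcomplete_mtotally_bounded by blast
  then have "compact_space (subtopology M.mtopology S)" by (simp add: Sub.mtopology_submetric)
  then show ?thesis unfolding compactin_subspace Mn_top_eq using assms(1) by simp
qed

lemma closed_box:
  "closedin (Mn_top absv n) {A \<in> Mn n. \<forall>j\<in>{1..n}. \<forall>k\<in>{1..n}. absv (A j k - C j k) \<le> R j k}"
  unfolding closedin_def topspace_Mn
proof (intro conjI)
  show "{A \<in> Mn n. \<forall>j\<in>{1..n}. \<forall>k\<in>{1..n}. absv (A j k - C j k) \<le> R j k} \<subseteq> Mn n" by blast
  show "openin (Mn_top absv n) (Mn n - {A \<in> Mn n. \<forall>j\<in>{1..n}. \<forall>k\<in>{1..n}. absv (A j k - C j k) \<le> R j k})"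
    unfolding openin_Mn
  proof (intro conjI ballI)
    show "Mn n - {A \<in> Mn n. \<forall>j\<in>{1..n}. \<forall>k\<in>{1..n}. absv (A j k - C j k) \<le> R j k} \<subseteq> Mn n" by blast
    fix A assume A: "A \<in> Mn n - {A \<in> Mn n. \<forall>j\<in>{1..n}. \<forall>k\<in>{1..n}. absv (A j k - C j k) \<le> R j k}"
    then obtain j k where jk: "j \<in> {1..n}" "k \<in> {1..n}" "absv (A j k - C j k) > R j k" by force
    show "\<exists>e>0. \<forall>B\<in>Mn n. (\<forall>j\<in>{1..n}. \<forall>k\<in>{1..n}. absv (B j k - A j k) < e) \<longrightarrow>
             B \<in> Mn n - {A \<in> Mn n. \<forall>j\<in>{1..n}. \<forall>k\<in>{1..n}. absv (A j k - C j k) \<le> R j k}"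
    proof (intro exI conjI ballI impI)
      show "absv (A j k - C j k) - R j k > 0" using jk by simp
      fix B assume B: "B \<in> Mn n" "\<forall>j'\<in>{1..n}. \<forall>k'\<in>{1..n}. absv (B j' k' - A j' k') < absv (A j k - C j k) - R j k"
      have "absv (A j k - C j k) \<le> absv (A j k - B j k) + absv (B j k - C j k)" by (rule tri_diff)
      moreover have "absv (A j k - B j k) < absv (A j k - C j k) - R j k"
        using B(2) jk commute[of "A j k" "B j k"] by simp
      ultimately have "absv (B j k - C j k) > R j k" by linarith
      then show "B \<in> Mn n - {A \<in> Mn n. \<forall>j\<in>{1..n}. \<forall>k\<in>{1..n}. absv (A j k - C j k) \<le> R j k}"
        using B(1) jk by force
    qed
  qed
qed


lemma ball_approx:
  assumes "\<delta> > 0"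
  shows "\<exists>F. finite F \<and> (\<forall>y\<in>F. absv y \<le> real p powr (- real_of_int L)) \<and>
     (\<forall>x. absv x \<le> real p powr (- real_of_int L) \<longrightarrow> (\<exists>y\<in>F. absv (x - y) < \<delta>))"
proof -
  define \<rho> where "\<rho> = real p powr (- real_of_int L)"
  have rpos: "\<rho> > 0" unfolding \<rho>_def using p_gt1 by simp
  have "1 / real p < 1" using p_gt1 by simp
  then obtain N where N: "(1 / real p) ^ N < \<delta> / \<rho>"
    using real_arch_pow_inv[of "\<delta> / \<rho>" "1 / real p"] assms rpos by auto
  define F where "F = (\<lambda>m. of_nat p powi L * of_nat m :: 'a) ` {..<p ^ N}"
  have absL: "absv (of_nat p powi L :: 'a) = \<rho>" unfolding \<rho>_def by (rule absp_powi)
  have "finite F" unfolding F_def by simp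
  moreover have "\<forall>y\<in>F. absv y \<le> \<rho>"
    unfolding F_def using of_nat_le1 rpos by (auto simp: mult absL)
  moreover have "\<forall>x. absv x \<le> \<rho> \<longrightarrow> (\<exists>y\<in>F. absv (x - y) < \<delta>)"
  proof (intro allI impI)
    fix x :: 'a assume x: "absv x \<le> \<rho>"
    define z where "z = of_nat p powi (-L) * x"
    have xz: "x = of_nat p powi L * z" unfolding z_def power_int_minus using p_powi_nz[of L]
      by (simp add: field_simps)
    have "absv z \<le> 1"
    proof -
      have "\<rho> * absv z = absv x" using xz absL by (simp add: mult)
      then have "\<rho> * absv z \<le> \<rho> * 1" using x by simp
      then show ?thesis using rpos by (simp only: mult_le_cancel_left_pos)
    qed
    then obtain m where m: "m < p ^ N" "absv (z - of_nat m) \<le> (1 / real p) ^ N"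
      using approx by blast
    have "x - of_nat p powi L * of_nat m = of_nat p powi L * (z - of_nat m)"
      using xz by (simp add: algebra_simps)
    then have "absv (x - of_nat p powi L * of_nat m) = \<rho> * absv (z - of_nat m)"
      by (simp add: mult absL)
    also have "\<dots> \<le> \<rho> * (1 / real p) ^ N" using m(2) rpos by simp
    also have "\<dots> < \<rho> * (\<delta> / \<rho>)" by (rule mult_strict_left_mono[OF N rpos])
    also have "\<dots> = \<delta>" using rpos by simp
    finally show "\<exists>y\<in>F. absv (x - y) < \<delta>" unfolding F_def using m(1) by blast
  qed
  ultimately show ?thesis unfolding \<rho>_def by blast
qed

lemma box_tb:
  "Metric_space.mtotally_bounded (Mn n) (mdist absv n)
     {A \<in> Mn n. \<forall>j\<in>{1..n}. \<forall>k\<in>{1..n}. absv (A j k - C j k) \<le> real p powr (- real_of_int L)}"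
proof -
  interpret M: Metric_space "Mn n" "mdist absv n" by (rule metric)
  let ?\<rho> = "real p powr (- real_of_int L)"
  let ?B = "{A \<in> Mn n. \<forall>j\<in>{1..n}. \<forall>k\<in>{1..n}. absv (A j k - C j k) \<le> ?\<rho>}"
  show ?thesis unfolding M.mtotally_bounded_def
  proof (intro allI impI)
    fix \<epsilon> :: real assume eps: "\<epsilon> > 0"
    define \<delta> where "\<delta> = \<epsilon> / (real n * real n + 1)"
    have dpos: "\<delta> > 0" unfolding \<delta>_def using eps by (simp add: add_nonneg_pos)
    obtain F where F: "finite F" "\<forall>y\<in>F. absv y \<le> ?\<rho>"
      "\<forall>x. absv x \<le> ?\<rho> \<longrightarrow> (\<exists>y\<in>F. absv (x - y) < \<delta>)"
      using ball_approx[OF dpos, of L] by blast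
    define K where "K = {A \<in> Mn n. \<forall>j\<in>{1..n}. \<forall>k\<in>{1..n}. A j k - C j k \<in> F}"
    define \<Phi> where "\<Phi> = (\<lambda>f j k. if j \<in> {1..n} \<and> k \<in> {1..n} then C j k + f (j, k) else (0::'a))"
    have "K \<subseteq> \<Phi> ` (PiE ({1..n} \<times> {1..n}) (\<lambda>_. F))"
    proof
      fix A assume A: "A \<in> K"
      define f where "f = restrict (\<lambda>jk. A (fst jk) (snd jk) - C (fst jk) (snd jk)) ({1..n} \<times> {1..n})"
      have "f \<in> PiE ({1..n} \<times> {1..n}) (\<lambda>_. F)" unfolding f_def using A K_def by auto
      moreover have "A = \<Phi> f"
      proof (intro ext)
        fix j k show "A j k = \<Phi> f j k"
        proof (cases "j \<in> {1..n} \<and> k \<in> {1..n}")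
          case True then show ?thesis unfolding \<Phi>_def f_def by simp
        next
          case False
          have "A \<in> Mn n" using A K_def by blast
          have "\<Phi> f j k = 0" by (simp only: \<Phi>_def if_not_P[OF False])
          then show ?thesis using Mn_zero[OF \<open>A \<in> Mn n\<close> False] by simp
        qed
      qed
      ultimately show "A \<in> \<Phi> ` (PiE ({1..n} \<times> {1..n}) (\<lambda>_. F))" by blast
    qed
    moreover have "finite (PiE ({1..n} \<times> {1..n}) (\<lambda>_. F))" using F(1) by (intro finite_PiE) auto
    ultimately have finK: "finite K" by (meson finite_imageI finite_subset)
    have KB: "K \<subseteq> ?B" unfolding K_def using F(2) by auto
    have cov: "?B \<subseteq> (\<Union>x\<in>K. M.mball x \<epsilon>)"
    proof
      fix A assume A: "A \<in> ?B"
      have "\<forall>j k. \<exists>y. (j \<in> {1..n} \<and> k \<in> {1..n}) \<longrightarrow> (y \<in> F \<and> absv (A j k - C j k - y) < \<delta>)"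
        using A F(3) by blast
      then obtain g where g: "\<And>j k. j \<in> {1..n} \<Longrightarrow> k \<in> {1..n} \<Longrightarrow> g j k \<in> F \<and> absv (A j k - C j k - g j k) < \<delta>"
        by metis
      define A' where "A' = (\<lambda>j k. if j \<in> {1..n} \<and> k \<in> {1..n} then C j k + g j k else 0)"
      have A'M: "A' \<in> Mn n" unfolding A'_def Mn_def by auto
      have A'K: "A' \<in> K" unfolding K_def using A'M g by (auto simp: A'_def)
      have "\<forall>j\<in>{1..n}. \<forall>k\<in>{1..n}. absv (A' j k - A j k) \<le> \<delta>"
      proof (intro ballI)
        fix j k assume jk: "j \<in> {1..n}" "k \<in> {1..n}"
        have eq: "A' j k - A j k = - (A j k - C j k - g j k)" unfolding A'_def using jk by simp
        have "absv (A' j k - A j k) = absv (A j k - C j k - g j k)" by (simp only: eq minus)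
        then show "absv (A' j k - A j k) \<le> \<delta>" using g[OF jk] by linarith
      qed
      then have "mdist absv n A' A \<le> real n * real n * \<delta>" by (rule mdist_le)
      also have "\<dots> < \<epsilon>" unfolding \<delta>_def by (rule small_lt[OF eps])
      finally have "A \<in> M.mball A' \<epsilon>" using A'M A by auto
      then show "A \<in> (\<Union>x\<in>K. M.mball x \<epsilon>)" using A'K by blast
    qed
    show "\<exists>K. finite K \<and> K \<subseteq> ?B \<and> ?B \<subseteq> (\<Union>x\<in>K. M.mball x \<epsilon>)"
      using finK KB cov by blast
  qed
qed

lemma compact_box:
  assumes "\<forall>j k. R j k \<le> real p powr (- real_of_int L)"
  shows "compactin (Mn_top absv n) {A \<in> Mn n. \<forall>j\<in>{1..n}. \<forall>k\<in>{1..n}. absv (A j k - C j k) \<le> R j k}"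
proof -
  interpret M: Metric_space "Mn n" "mdist absv n" by (rule metric)
  have "{A \<in> Mn n. \<forall>j\<in>{1..n}. \<forall>k\<in>{1..n}. absv (A j k - C j k) \<le> R j k} \<subseteq>
        {A \<in> Mn n. \<forall>j\<in>{1..n}. \<forall>k\<in>{1..n}. absv (A j k - C j k) \<le> real p powr (- real_of_int L)}"
    using assms by (force intro: order_trans[OF _ assms[rule_format]])
  then have "M.mtotally_bounded {A \<in> Mn n. \<forall>j\<in>{1..n}. \<forall>k\<in>{1..n}. absv (A j k - C j k) \<le> R j k}"
    using box_tb M.mtotally_bounded_subset by blast
  then show ?thesis by (intro compactin_Mn closed_box) auto
qed


definition Uset :: "nat \<Rightarrow> (nat \<Rightarrow> int) \<Rightarrow> 'a mat_fn set" where
  "Uset n l = {A \<in> Mn n. \<forall>j\<in>{1..n}. \<forall>k\<in>{1..n}. j < k \<longrightarrow> absv (A j k) \<le> real p powr (- real_of_int (l (k - j)))}"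

lemma open_Uset: "openin (Mn_top absv n) (Uset n l)"
  unfolding openin_Mn
proof (intro conjI ballI)
  show "Uset n l \<subseteq> Mn n" unfolding Uset_def by blast
  fix A assume A: "A \<in> Uset n l"
  define e where "e = Min (insert 1 ((\<lambda>d. real p powr (- real_of_int (l d))) ` {1..n}))"
  have epos: "e > 0" unfolding e_def using p_gt1 by (subst Min_gr_iff) auto
  have ele: "\<And>d. d \<in> {1..n} \<Longrightarrow> e \<le> real p powr (- real_of_int (l d))"
    unfolding e_def by (rule Min_le) auto
  show "\<exists>e>0. \<forall>B\<in>Mn n. (\<forall>j\<in>{1..n}. \<forall>k\<in>{1..n}. absv (B j k - A j k) < e) \<longrightarrow> B \<in> Uset n l"
  proof (intro exI conjI ballI impI epos)
    fix B assume B: "B \<in> Mn n" "\<forall>j\<in>{1..n}. \<forall>k\<in>{1..n}. absv (B j k - A j k) < e"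
    have "\<forall>j\<in>{1..n}. \<forall>k\<in>{1..n}. j < k \<longrightarrow> absv (B j k) \<le> real p powr (- real_of_int (l (k - j)))"
    proof (intro ballI impI)
      fix j k assume jk: "j \<in> {1..n}" "k \<in> {1..n}" "j < k"
      have d: "k - j \<in> {1..n}" using jk by auto
      have "absv (B j k) = absv ((B j k - A j k) + A j k)" by simp
      also have "\<dots> \<le> max (absv (B j k - A j k)) (absv (A j k))" by (rule ultra)
      also have "\<dots> \<le> real p powr (- real_of_int (l (k - j)))"
      proof (intro max.boundedI)
        have "absv (B j k - A j k) < e" using B(2) jk by blast
        then show "absv (B j k - A j k) \<le> real p powr (- real_of_int (l (k - j)))" using ele[OF d] by linarith
        show "absv (A j k) \<le> real p powr (- real_of_int (l (k - j)))" using A jk unfolding Uset_def by blast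
      qed
      finally show "absv (B j k) \<le> real p powr (- real_of_int (l (k - j)))" .
    qed
    then show "B \<in> Uset n l" unfolding Uset_def using B(1) by blast
  qed (rule epos)
qed

lemma S_eq:
  assumes "T \<subseteq> Mn n"
  shows "{B \<in> T. \<forall>j k. 1 \<le> j \<and> j < k \<and> k \<le> n \<longrightarrow> B j k \<in> pZp p absv (l (k - j))} = Uset n l \<inter> T"
proof (intro equalityI subsetI)
  fix B assume B: "B \<in> {B \<in> T. \<forall>j k. 1 \<le> j \<and> j < k \<and> k \<le> n \<longrightarrow> B j k \<in> pZp p absv (l (k - j))}"
  have "\<forall>j\<in>{1..n}. \<forall>k\<in>{1..n}. j < k \<longrightarrow> absv (B j k) \<le> real p powr (- real_of_int (l (k - j)))"
  proof (intro ballI impI)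
    fix j k assume jk: "j \<in> {1..n}" "k \<in> {1..n}" "j < k"
    then have "1 \<le> j \<and> j < k \<and> k \<le> n" by simp
    then have "B j k \<in> pZp p absv (l (k - j))" using B by blast
    then show "absv (B j k) \<le> real p powr (- real_of_int (l (k - j)))" by (simp only: pZp_iff)
  qed
  then show "B \<in> Uset n l \<inter> T" using B assms unfolding Uset_def by blast
next
  fix B assume B: "B \<in> Uset n l \<inter> T"
  have "\<forall>j k. 1 \<le> j \<and> j < k \<and> k \<le> n \<longrightarrow> B j k \<in> pZp p absv (l (k - j))"
  proof (intro allI impI)
    fix j k assume "1 \<le> j \<and> j < k \<and> k \<le> n"
    then have jk: "j \<in> {1..n}" "k \<in> {1..n}" "j < k" by auto
    then have "absv (B j k) \<le> real p powr (- real_of_int (l (k - j)))" using B unfolding Uset_def by blast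
    then show "B j k \<in> pZp p absv (l (k - j))" by (simp only: pZp_iff)
  qed
  then show "B \<in> {B \<in> T. \<forall>j k. 1 \<le> j \<and> j < k \<and> k \<le> n \<longrightarrow> B j k \<in> pZp p absv (l (k - j))}"
    using B by blast
qed

lemmas SR_eq = S_eq[OF Tn_plus_Mn]
lemmas SG_eq = S_eq[OF T_plus_Mn]

definition Rad :: "nat \<Rightarrow> (nat \<Rightarrow> int) \<Rightarrow> nat \<Rightarrow> nat \<Rightarrow> real" where
  "Rad n l j k = (if j < k \<and> k - j \<le> n then real p powr (- real_of_int (l (k - j))) else 0)"

lemma Rad_bound: assumes "n \<ge> 1" shows "\<exists>L. \<forall>j k. Rad n l j k \<le> real p powr (- real_of_int L)"
proof (intro exI allI)
  fix j k
  define L where "L = Min (l ` {1..n})"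
  show "Rad n l j k \<le> real p powr (- real_of_int L)"
  proof (cases "j < k \<and> k - j \<le> n")
    case True
    then have "k - j \<in> {1..n}" by auto
    then have "L \<le> l (k - j)" unfolding L_def by (intro Min_le) auto
    then show ?thesis unfolding Rad_def using True p_gt1 by (simp add: powr_mono)
  next
    case False
    then show ?thesis by (simp only: Rad_def if_not_P[OF False]) simp
  qed
qed

lemma SR_box: "{B \<in> Tn_plus n. \<forall>j k. 1 \<le> j \<and> j < k \<and> k \<le> n \<longrightarrow> B j k \<in> pZp p absv (l (k - j))}
   = {A \<in> Mn n. \<forall>j\<in>{1..n}. \<forall>k\<in>{1..n}. absv (A j k - (\<lambda>j k. 0) j k) \<le> Rad n l j k}"
proof (intro equalityI subsetI)
  fix B assume B: "B \<in> {B \<in> Tn_plus n. \<forall>j k. 1 \<le> j \<and> j < k \<and> k \<le> n \<longrightarrow> B j k \<in> pZp p absv (l (k - j))}"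
  then have BT: "B \<in> Tn_plus n" by blast
  have "\<forall>j\<in>{1..n}. \<forall>k\<in>{1..n}. absv (B j k - 0) \<le> Rad n l j k"
  proof (intro ballI)
    fix j k assume jk: "j \<in> {1..n}" "k \<in> {1..n}"
    show "absv (B j k - 0) \<le> Rad n l j k"
    proof (cases "j < k")
      case True
      then show ?thesis using B jk unfolding pZp_iff Rad_def by auto
    next
      case False
      then have "B j k = 0" using BT unfolding Tn_plus_def by auto
      then show ?thesis using False unfolding Rad_def by simp
    qed
  qed
  then show "B \<in> {A \<in> Mn n. \<forall>j\<in>{1..n}. \<forall>k\<in>{1..n}. absv (A j k - (\<lambda>j k. 0) j k) \<le> Rad n l j k}"
    using BT Tn_plus_Mn by auto
next
  fix B assume B: "B \<in> {A \<in> Mn n. \<forall>j\<in>{1..n}. \<forall>k\<in>{1..n}. absv (A j k - (\<lambda>j k. 0) j k) \<le> Rad n l j k}"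
  have BT: "B \<in> Tn_plus n" unfolding Tn_plus_def
  proof (intro CollectI allI impI)
    fix j k assume nz: "B j k \<noteq> 0"
    then have jk: "j \<in> {1..n}" "k \<in> {1..n}" using B unfolding Mn_def by auto
    have "absv (B j k) > 0" using nz nonneg[of "B j k"] zero_iff[of "B j k"] by linarith
    then have "Rad n l j k > 0" using B jk by force
    then have "j < k" unfolding Rad_def by (auto split: if_splits)
    then show "1 \<le> j \<and> j < k \<and> k \<le> n" using jk by auto
  qed
  have "\<forall>j k. 1 \<le> j \<and> j < k \<and> k \<le> n \<longrightarrow> B j k \<in> pZp p absv (l (k - j))"
  proof (intro allI impI)
    fix j k assume jk: "1 \<le> j \<and> j < k \<and> k \<le> n"
    then have "absv (B j k - 0) \<le> Rad n l j k" using B by auto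
    moreover have "j < k \<and> k - j \<le> n" using jk by auto
    ultimately show "B j k \<in> pZp p absv (l (k - j))" unfolding pZp_iff Rad_def by simp
  qed
  then show "B \<in> {B \<in> Tn_plus n. \<forall>j k. 1 \<le> j \<and> j < k \<and> k \<le> n \<longrightarrow> B j k \<in> pZp p absv (l (k - j))}"
    using BT by blast
qed

lemma SG_box: "{B \<in> T_plus n. \<forall>j k. 1 \<le> j \<and> j < k \<and> k \<le> n \<longrightarrow> B j k \<in> pZp p absv (l (k - j))}
   = {A \<in> Mn n. \<forall>j\<in>{1..n}. \<forall>k\<in>{1..n}. absv (A j k - mat_one n j k) \<le> Rad n l j k}"
proof (intro equalityI subsetI)
  fix B assume B: "B \<in> {B \<in> T_plus n. \<forall>j k. 1 \<le> j \<and> j < k \<and> k \<le> n \<longrightarrow> B j k \<in> pZp p absv (l (k - j))}"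
  then have BT: "B \<in> T_plus n" by blast
  then have Bjk: "\<And>j k. B j k = (if j = k \<and> 1 \<le> j \<and> j \<le> n then 1
       else if 1 \<le> j \<and> j < k \<and> k \<le> n then B j k else 0)" unfolding T_plus_def by blast
  have "\<forall>j\<in>{1..n}. \<forall>k\<in>{1..n}. absv (B j k - mat_one n j k) \<le> Rad n l j k"
  proof (intro ballI)
    fix j k assume jk: "j \<in> {1..n}" "k \<in> {1..n}"
    show "absv (B j k - mat_one n j k) \<le> Rad n l j k"
    proof (cases "j < k")
      case True
      then show ?thesis using B jk unfolding pZp_iff Rad_def mat_one_def by auto
    next
      case False
      then have "B j k = mat_one n j k" using Bjk[of j k] jk unfolding mat_one_def by auto
      then show ?thesis using False unfolding Rad_def by simp
    qed
  qed
  then show "B \<in> {A \<in> Mn n. \<forall>j\<in>{1..n}. \<forall>k\<in>{1..n}. absv (A j k - mat_one n j k) \<le> Rad n l j k}"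
    using BT T_plus_Mn by auto
next
  fix B assume B: "B \<in> {A \<in> Mn n. \<forall>j\<in>{1..n}. \<forall>k\<in>{1..n}. absv (A j k - mat_one n j k) \<le> Rad n l j k}"
  have BM: "B \<in> Mn n" using B by blast
  have BT: "B \<in> T_plus n" unfolding T_plus_def
  proof (intro CollectI allI)
    fix j k
    show "B j k = (if j = k \<and> 1 \<le> j \<and> j \<le> n then 1
       else if 1 \<le> j \<and> j < k \<and> k \<le> n then B j k else 0)"
    proof (cases "j \<in> {1..n} \<and> k \<in> {1..n}")
      case False
      then show ?thesis using Mn_zero[OF BM False] by auto
    next
      case True
      note rng = True
      then have le: "absv (B j k - mat_one n j k) \<le> Rad n l j k" using B by blast
      show ?thesis
      proof (cases "j < k")
        case True then show ?thesis using rng by auto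
      next
        case False
        then have "absv (B j k - mat_one n j k) \<le> 0" using le unfolding Rad_def by simp
        then have "B j k = mat_one n j k"
          using nonneg[of "B j k - mat_one n j k"] zero_iff[of "B j k - mat_one n j k"] by simp
        then show ?thesis using False True unfolding mat_one_def by auto
      qed
    qed
  qed
  have "\<forall>j k. 1 \<le> j \<and> j < k \<and> k \<le> n \<longrightarrow> B j k \<in> pZp p absv (l (k - j))"
  proof (intro allI impI)
    fix j k assume jk: "1 \<le> j \<and> j < k \<and> k \<le> n"
    have m0: "mat_one n j k = 0" unfolding mat_one_def using jk by auto
    have "absv (B j k - mat_one n j k) \<le> Rad n l j k" using B jk by auto
    then have "absv (B j k - 0) \<le> Rad n l j k" by (simp only: m0)
    moreover have "j < k \<and> k - j \<le> n" using jk by auto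
    ultimately show "B j k \<in> pZp p absv (l (k - j))" unfolding pZp_iff Rad_def by simp
  qed
  then show "B \<in> {B \<in> T_plus n. \<forall>j k. 1 \<le> j \<and> j < k \<and> k \<le> n \<longrightarrow> B j k \<in> pZp p absv (l (k - j))}"
    using BT by blast
qed

lemma topo_part:
  assumes "n \<ge> 1"
  shows "compactin (Tn_plus_top absv n) {B \<in> Tn_plus n. \<forall>j k. 1 \<le> j \<and> j < k \<and> k \<le> n \<longrightarrow> B j k \<in> pZp p absv (l (k - j))}"
    "openin (Tn_plus_top absv n) {B \<in> Tn_plus n. \<forall>j k. 1 \<le> j \<and> j < k \<and> k \<le> n \<longrightarrow> B j k \<in> pZp p absv (l (k - j))}"
    "compactin (T_plus_top absv n) {B \<in> T_plus n. \<forall>j k. 1 \<le> j \<and> j < k \<and> k \<le> n \<longrightarrow> B j k \<in> pZp p absv (l (k - j))}"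
    "openin (T_plus_top absv n) {B \<in> T_plus n. \<forall>j k. 1 \<le> j \<and> j < k \<and> k \<le> n \<longrightarrow> B j k \<in> pZp p absv (l (k - j))}"
proof -
  obtain L where L: "\<forall>j k. Rad n l j k \<le> real p powr (- real_of_int L)" using Rad_bound[OF assms] by blast
  show "compactin (Tn_plus_top absv n) {B \<in> Tn_plus n. \<forall>j k. 1 \<le> j \<and> j < k \<and> k \<le> n \<longrightarrow> B j k \<in> pZp p absv (l (k - j))}"
    unfolding Tn_plus_top_def compactin_subtopology
  proof
    show "compactin (Mn_top absv n) {B \<in> Tn_plus n. \<forall>j k. 1 \<le> j \<and> j < k \<and> k \<le> n \<longrightarrow> B j k \<in> pZp p absv (l (k - j))}"
      unfolding SR_box by (rule compact_box[OF L])
  qed blast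
  show "compactin (T_plus_top absv n) {B \<in> T_plus n. \<forall>j k. 1 \<le> j \<and> j < k \<and> k \<le> n \<longrightarrow> B j k \<in> pZp p absv (l (k - j))}"
    unfolding T_plus_top_def compactin_subtopology
  proof
    show "compactin (Mn_top absv n) {B \<in> T_plus n. \<forall>j k. 1 \<le> j \<and> j < k \<and> k \<le> n \<longrightarrow> B j k \<in> pZp p absv (l (k - j))}"
      unfolding SG_box by (rule compact_box[OF L])
  qed blast
  show "openin (Tn_plus_top absv n) {B \<in> Tn_plus n. \<forall>j k. 1 \<le> j \<and> j < k \<and> k \<le> n \<longrightarrow> B j k \<in> pZp p absv (l (k - j))}"
    unfolding Tn_plus_top_def openin_subtopology SR_eq using open_Uset by blast
  show "openin (T_plus_top absv n) {B \<in> T_plus n. \<forall>j k. 1 \<le> j \<and> j < k \<and> k \<le> n \<longrightarrow> B j k \<in> pZp p absv (l (k - j))}"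
    unfolding T_plus_top_def openin_subtopology SG_eq using open_Uset by blast
qed


lemma absv_sum_le:
  assumes "finite I" "c \<ge> 0" "\<forall>i\<in>I. absv (f i) \<le> c"
  shows "absv (sum f I) \<le> c"
  using assms
proof (induction I rule: finite_induct)
  case empty then show ?case by simp
next
  case (insert x F)
  have "absv (sum f (insert x F)) = absv (f x + sum f F)" using insert.hyps by simp
  also have "\<dots> \<le> max (absv (f x)) (absv (sum f F))" by (rule ultra)
  also have "\<dots> \<le> c" using insert by simp
  finally show ?case .
qed

lemma pZp_zero: "0 \<in> pZp p absv L" unfolding pZp_iff by simp

lemma SR_subring:
  assumes sub: "\<forall>\<alpha> \<beta>. 1 \<le> \<alpha> \<and> 1 \<le> \<beta> \<and> \<alpha> + \<beta> \<le> n - 1 \<longrightarrow> l (\<alpha> + \<beta>) \<le> l \<alpha> + l \<beta>"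
  shows "is_subring_Tn n {B \<in> Tn_plus n. \<forall>j k. 1 \<le> j \<and> j < k \<and> k \<le> n \<longrightarrow> B j k \<in> pZp p absv (l (k - j))}"
  (is "is_subring_Tn n ?S")
proof -
  have T: "is_subring_Tn n (Tn_plus n :: 'a mat_fn set)" by (rule Tn_plus_subring)
  have "(\<lambda>j k. 0) \<in> ?S" using T pZp_zero unfolding is_subring_Tn_def by auto
  moreover have "\<forall>A\<in>?S. \<forall>B\<in>?S. mat_add A B \<in> ?S \<and> mat_mult n A B \<in> ?S"
  proof (intro ballI conjI)
    fix A B assume A: "A \<in> ?S" and B: "B \<in> ?S"
    have AT: "A \<in> Tn_plus n" and BT: "B \<in> Tn_plus n" using A B by auto
    show "mat_add A B \<in> ?S"
    proof (intro CollectI conjI allI impI)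
      show "mat_add A B \<in> Tn_plus n" using T AT BT unfolding is_subring_Tn_def by blast
      fix j k assume jk: "1 \<le> j \<and> j < k \<and> k \<le> n"
      have "absv (A j k + B j k) \<le> max (absv (A j k)) (absv (B j k))" by (rule ultra)
      also have "\<dots> \<le> real p powr (- real_of_int (l (k - j)))"
        using A B jk unfolding pZp_iff by auto
      finally show "mat_add A B j k \<in> pZp p absv (l (k - j))" unfolding pZp_iff mat_add_def .
    qed
    show "mat_mult n A B \<in> ?S"
    proof (intro CollectI conjI allI impI)
      show "mat_mult n A B \<in> Tn_plus n" using T AT BT unfolding is_subring_Tn_def by blast
      fix j k assume jk: "1 \<le> j \<and> j < k \<and> k \<le> n"
      have "absv (\<Sum>i\<in>{1..n}. A j i * B i k) \<le> real p powr (- real_of_int (l (k - j)))"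
      proof (rule absv_sum_le, simp, simp, intro ballI)
        fix i assume i: "i \<in> {1..n}"
        show "absv (A j i * B i k) \<le> real p powr (- real_of_int (l (k - j)))"
        proof (cases "A j i = 0 \<or> B i k = 0")
          case True then show ?thesis by auto
        next
          case False
          then have ji: "1 \<le> j \<and> j < i \<and> i \<le> n" and ik: "1 \<le> i \<and> i < k \<and> k \<le> n"
            using AT BT unfolding Tn_plus_def by blast+
          have a: "absv (A j i) \<le> real p powr (- real_of_int (l (i - j)))" using A ji unfolding pZp_iff by auto
          have b: "absv (B i k) \<le> real p powr (- real_of_int (l (k - i)))" using B ik unfolding pZp_iff by auto
          have "absv (A j i * B i k) \<le> real p powr (- real_of_int (l (i - j))) * real p powr (- real_of_int (l (k - i)))"
            unfolding mult by (rule mult_mono[OF a b]) auto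
          also have "\<dots> = real p powr (- real_of_int (l (i - j) + l (k - i)))"
            by (simp add: powr_add[symmetric])
          also have "\<dots> \<le> real p powr (- real_of_int (l (k - j)))"
          proof (rule powr_mono)
            have h: "1 \<le> i - j \<and> 1 \<le> k - i \<and> (i - j) + (k - i) \<le> n - 1" using ji ik by auto
            then have "l ((i - j) + (k - i)) \<le> l (i - j) + l (k - i)" using sub by blast
            moreover have "(i - j) + (k - i) = k - j" using ji ik by simp
            ultimately show "- real_of_int (l (i - j) + l (k - i)) \<le> - real_of_int (l (k - j))" by simp
            show "1 \<le> real p" using p_gt1 by simp
          qed
          finally show ?thesis .
        qed
      qed
      then show "mat_mult n A B j k \<in> pZp p absv (l (k - j))" unfolding pZp_iff mat_mult_def .
    qed
  qed
  moreover have "\<forall>A\<in>?S. mat_neg A \<in> ?S"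
  proof (intro ballI CollectI conjI allI impI)
    fix A assume A: "A \<in> ?S"
    show "mat_neg A \<in> Tn_plus n" using T A unfolding is_subring_Tn_def by blast
    fix j k assume "1 \<le> j \<and> j < k \<and> k \<le> n"
    then show "mat_neg A j k \<in> pZp p absv (l (k - j))" using A unfolding pZp_iff mat_neg_def by auto
  qed
  ultimately show ?thesis unfolding is_subring_Tn_def by blast
qed

lemma SG_img: "{A \<in> T_plus n. \<forall>j k. 1 \<le> j \<and> j < k \<and> k \<le> n \<longrightarrow> A j k \<in> pZp p absv (l (k - j))}
  = mat_add (mat_one n) ` {B \<in> Tn_plus n. \<forall>j k. 1 \<le> j \<and> j < k \<and> k \<le> n \<longrightarrow> B j k \<in> pZp p absv (l (k - j))}"
proof (intro equalityI subsetI)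
  fix A assume A: "A \<in> {A \<in> T_plus n. \<forall>j k. 1 \<le> j \<and> j < k \<and> k \<le> n \<longrightarrow> A j k \<in> pZp p absv (l (k - j))}"
  then obtain N where N: "N \<in> Tn_plus n" "A = mat_add (mat_one n) N" using T_plus_eq by blast
  have "\<forall>j k. 1 \<le> j \<and> j < k \<and> k \<le> n \<longrightarrow> N j k \<in> pZp p absv (l (k - j))"
  proof (intro allI impI)
    fix j k assume jk: "1 \<le> j \<and> j < k \<and> k \<le> n"
    then have eq: "A j k = N j k" unfolding N(2) mat_add_def mat_one_def by simp
    have "A j k \<in> pZp p absv (l (k - j))" using A jk by blast
    then show "N j k \<in> pZp p absv (l (k - j))" using eq by simp
  qed
  then show "A \<in> mat_add (mat_one n) ` {B \<in> Tn_plus n. \<forall>j k. 1 \<le> j \<and> j < k \<and> k \<le> n \<longrightarrow> B j k \<in> pZp p absv (l (k - j))}"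
    using N by blast
next
  fix A assume "A \<in> mat_add (mat_one n) ` {B \<in> Tn_plus n. \<forall>j k. 1 \<le> j \<and> j < k \<and> k \<le> n \<longrightarrow> B j k \<in> pZp p absv (l (k - j))}"
  then obtain N where N: "N \<in> Tn_plus n" "\<forall>j k. 1 \<le> j \<and> j < k \<and> k \<le> n \<longrightarrow> N j k \<in> pZp p absv (l (k - j))"
    "A = mat_add (mat_one n) N" by blast
  have "A \<in> T_plus n" using N T_plus_eq by blast
  moreover have "\<forall>j k. 1 \<le> j \<and> j < k \<and> k \<le> n \<longrightarrow> A j k \<in> pZp p absv (l (k - j))"
  proof (intro allI impI)
    fix j k assume jk: "1 \<le> j \<and> j < k \<and> k \<le> n"
    then have "A j k = N j k" unfolding N(3) mat_add_def mat_one_def by simp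
    then show "A j k \<in> pZp p absv (l (k - j))" using N(2) jk by auto
  qed
  ultimately show "A \<in> {A \<in> T_plus n. \<forall>j k. 1 \<le> j \<and> j < k \<and> k \<le> n \<longrightarrow> A j k \<in> pZp p absv (l (k - j))}" by blast
qed

lemma SG_subgroup:
  assumes sub: "\<forall>\<alpha> \<beta>. 1 \<le> \<alpha> \<and> 1 \<le> \<beta> \<and> \<alpha> + \<beta> \<le> n - 1 \<longrightarrow> l (\<alpha> + \<beta>) \<le> l \<alpha> + l \<beta>"
    and n: "n \<ge> 1"
  shows "subgroup {A \<in> T_plus n. \<forall>j k. 1 \<le> j \<and> j < k \<and> k \<le> n \<longrightarrow> A j k \<in> pZp p absv (l (k - j))} (T_plus_group n)"
  unfolding SG_img by (rule subgroup_R[OF SR_subring[OF sub] n])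


lemma delta_T_plus: assumes A: "A \<in> T_plus n" shows "delta r A \<in> T_plus n"
  unfolding T_plus_def
proof (intro CollectI allI)
  fix j k
  have Ajk: "A j k = (if j = k \<and> 1 \<le> j \<and> j \<le> n then 1
       else if 1 \<le> j \<and> j < k \<and> k \<le> n then A j k else 0)" using A unfolding T_plus_def by blast
  show "delta r A j k = (if j = k \<and> 1 \<le> j \<and> j \<le> n then 1
       else if 1 \<le> j \<and> j < k \<and> k \<le> n then delta r A j k else 0)"
  proof (cases "j < k")
    case True
    show ?thesis
    proof (cases "1 \<le> j \<and> k \<le> n")
      case True2: True
      then show ?thesis using True by simp
    next
      case False
      then have "A j k = 0" using Ajk True by auto
      then show ?thesis using True False unfolding delta_def by auto
    qed
  next
    case False
    then have "delta r A j k = A j k" unfolding delta_def by simp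
    then show ?thesis using Ajk False by auto
  qed
qed

lemma rpow_eq: "((of_nat p :: 'a) powi m) ^ d = of_nat p powi (m * int d)"
  by (simp add: power_int_mult)

lemma absv_rpow: "absv (((of_nat p :: 'a) powi m) ^ d) = real p powr (- (real_of_int m * real d))"
  unfolding rpow_eq absp_powi by simp

lemma delta_img:
  "delta ((of_nat p) powi m) ` T_plus_Zp absv n =
   {A \<in> T_plus n. \<forall>j k. 1 \<le> j \<and> j < k \<and> k \<le> n \<longrightarrow> A j k \<in> pZp p absv (m * int (k - j))}"
proof (intro equalityI subsetI)
  fix B assume "B \<in> delta ((of_nat p) powi m) ` T_plus_Zp absv n"
  then obtain A where A: "A \<in> T_plus_Zp absv n" "B = delta ((of_nat p) powi m) A" by blast
  have AT: "A \<in> T_plus n" using A(1) unfolding T_plus_Zp_def by blast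
  have "\<forall>j k. 1 \<le> j \<and> j < k \<and> k \<le> n \<longrightarrow> B j k \<in> pZp p absv (m * int (k - j))"
  proof (intro allI impI)
    fix j k assume jk: "1 \<le> j \<and> j < k \<and> k \<le> n"
    have Az: "absv (A j k) \<le> 1" using A(1) jk unfolding T_plus_Zp_def Zp_def by blast
    have "absv (B j k) = absv (((of_nat p :: 'a) powi m) ^ (k - j)) * absv (A j k)"
      unfolding A(2) delta_def using jk by (simp add: mult)
    also have "\<dots> \<le> absv (((of_nat p :: 'a) powi m) ^ (k - j))" using Az by (simp add: mult_left_le)
    also have "\<dots> = real p powr (- real_of_int (m * int (k - j)))" unfolding absv_rpow by simp
    finally show "B j k \<in> pZp p absv (m * int (k - j))" unfolding pZp_iff .
  qed
  then show "B \<in> {A \<in> T_plus n. \<forall>j k. 1 \<le> j \<and> j < k \<and> k \<le> n \<longrightarrow> A j k \<in> pZp p absv (m * int (k - j))}"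
    using delta_T_plus[OF AT] A(2) by blast
next
  fix B assume B: "B \<in> {A \<in> T_plus n. \<forall>j k. 1 \<le> j \<and> j < k \<and> k \<le> n \<longrightarrow> A j k \<in> pZp p absv (m * int (k - j))}"
  then have BT: "B \<in> T_plus n" by blast
  define A where "A = delta ((of_nat p) powi (-m)) B"
  have AT: "A \<in> T_plus n" unfolding A_def by (rule delta_T_plus[OF BT])
  have "\<forall>j k. 1 \<le> j \<and> j < k \<and> k \<le> n \<longrightarrow> A j k \<in> Zp absv"
  proof (intro allI impI)
    fix j k assume jk: "1 \<le> j \<and> j < k \<and> k \<le> n"
    have Bb: "absv (B j k) \<le> real p powr (- (real_of_int m * real (k - j)))"
      using B jk unfolding pZp_iff by auto
    have "absv (A j k) = real p powr (real_of_int m * real (k - j)) * absv (B j k)"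
      unfolding A_def delta_def using jk by (simp add: mult absv_rpow)
    also have "\<dots> \<le> real p powr (real_of_int m * real (k - j)) * real p powr (- (real_of_int m * real (k - j)))"
      using Bb by (intro mult_left_mono) auto
    also have "\<dots> = 1" using p_gt1 by (simp add: powr_add[symmetric])
    finally show "A j k \<in> Zp absv" unfolding Zp_def by simp
  qed
  then have "A \<in> T_plus_Zp absv n" using AT unfolding T_plus_Zp_def by blast
  moreover have "delta ((of_nat p) powi m) A = B"
  proof (intro ext)
    fix j k
    have inv1: "((of_nat p :: 'a) powi m) * (of_nat p powi (-m)) = 1"
      using p_powi_nz[of m] by (simp add: power_int_minus)
    have "((of_nat p :: 'a) powi m) ^ (k - j) * ((of_nat p powi (-m)) ^ (k - j) * B j k) =
          (((of_nat p :: 'a) powi m) * (of_nat p powi (-m))) ^ (k - j) * B j k"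
      by (simp add: power_mult_distrib mult.assoc)
    then show "delta ((of_nat p) powi m) A j k = B j k"
      unfolding A_def delta_def using inv1 by simp
  qed
  ultimately show "B \<in> delta ((of_nat p) powi m) ` T_plus_Zp absv n" by blast
qed

lemma root_le:
  assumes x: "x \<ge> 0" and d: "d \<ge> 1"
  shows "x powr (1 / real d) \<le> real p powr (- real_of_int m) \<longleftrightarrow> x \<le> real p powr (- (real_of_int m * real d))"
proof (cases "x = 0")
  case True then show ?thesis by simp
next
  case False
  then have xp: "x > 0" using x by simp
  have dp: "real d > 0" using d by simp
  show ?thesis
  proof
    assume h: "x powr (1 / real d) \<le> real p powr (- real_of_int m)"
    have "(x powr (1 / real d)) powr real d \<le> (real p powr (- real_of_int m)) powr real d"
      by (rule powr_mono2) (use h dp in auto)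
    then show "x \<le> real p powr (- (real_of_int m * real d))"
      using dp xp by (simp add: powr_powr)
  next
    assume h: "x \<le> real p powr (- (real_of_int m * real d))"
    have "x powr (1 / real d) \<le> (real p powr (- (real_of_int m * real d))) powr (1 / real d)"
      by (rule powr_mono2) (use h dp x in auto)
    then show "x powr (1 / real d) \<le> real p powr (- real_of_int m)"
      using dp by (simp add: powr_powr)
  qed
qed

lemma max_char:
  assumes n: "n \<ge> 2" and A: "A \<in> T_plus n"
  shows "(Max {absv (A j k) powr (1 / real (k - j)) | j k. 1 \<le> j \<and> j < k \<and> k \<le> n} \<le> real p powr (- real_of_int m))
     \<longleftrightarrow> (\<forall>j k. 1 \<le> j \<and> j < k \<and> k \<le> n \<longrightarrow> A j k \<in> pZp p absv (m * int (k - j)))"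
proof -
  let ?E = "{absv (A j k) powr (1 / real (k - j)) | j k. 1 \<le> j \<and> j < k \<and> k \<le> n}"
  have "?E \<subseteq> (\<lambda>jk. absv (A (fst jk) (snd jk)) powr (1 / real (snd jk - fst jk))) ` ({1..n} \<times> {1..n})"
  proof
    fix a assume "a \<in> ?E"
    then obtain j k where jk: "a = absv (A j k) powr (1 / real (k - j))" "1 \<le> j \<and> j < k \<and> k \<le> n" by blast
    show "a \<in> (\<lambda>jk. absv (A (fst jk) (snd jk)) powr (1 / real (snd jk - fst jk))) ` ({1..n} \<times> {1..n})"
      by (rule image_eqI[where x = "(j, k)"]) (use jk in auto)
  qed
  then have fin: "finite ?E" by (rule finite_subset) simp
  have ne: "?E \<noteq> {}" using n by force
  have "(Max ?E \<le> real p powr (- real_of_int m)) \<longleftrightarrow> (\<forall>a\<in>?E. a \<le> real p powr (- real_of_int m))"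
    by (rule Max_le_iff[OF fin ne])
  also have "\<dots> \<longleftrightarrow> (\<forall>j k. 1 \<le> j \<and> j < k \<and> k \<le> n \<longrightarrow> absv (A j k) powr (1 / real (k - j)) \<le> real p powr (- real_of_int m))"
    by blast
  also have "\<dots> \<longleftrightarrow> (\<forall>j k. 1 \<le> j \<and> j < k \<and> k \<le> n \<longrightarrow> A j k \<in> pZp p absv (m * int (k - j)))"
  proof (intro iff_allI imp_cong refl)
    fix j k assume "1 \<le> j \<and> j < k \<and> k \<le> n"
    then have d: "k - j \<ge> 1" by linarith
    have r: "(absv (A j k) powr (1 / real (k - j)) \<le> real p powr (- real_of_int m)) \<longleftrightarrow>
      absv (A j k) \<le> real p powr (- (real_of_int m * real (k - j)))" by (rule root_le[OF nonneg d])
    have z: "A j k \<in> pZp p absv (m * int (k - j)) \<longleftrightarrow> absv (A j k) \<le> real p powr (- real_of_int (m * int (k - j)))"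
      by (rule pZp_iff)
    have e: "real_of_int (m * int (k - j)) = real_of_int m * real (k - j)" by simp
    show "absv (A j k) powr (1 / real (k - j)) \<le> real p powr (- real_of_int m) \<longleftrightarrow> A j k \<in> pZp p absv (m * int (k - j))"
      by (simp only: r z e)
  qed
  finally show ?thesis .
qed

lemma max_set:
  assumes n: "n \<ge> 2"
  shows "{A \<in> T_plus n. Max {absv (A j k) powr (1 / real (k - j)) | j k. 1 \<le> j \<and> j < k \<and> k \<le> n}
                           \<le> real p powr (- real_of_int m)}
            = delta ((of_nat p) powi m) ` T_plus_Zp absv n"
  unfolding delta_img using max_char[OF n] by blast


definition Uc :: "nat \<Rightarrow> nat \<Rightarrow> 'a mat_fn set" where
  "Uc n r = {A \<in> Mn n. \<forall>j\<in>{1..n}. \<forall>k\<in>{1..n}. absv (A j k) < real r + 1}"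

lemma open_Uc: "openin (Mn_top absv n) (Uc n r)"
  unfolding openin_Mn
proof (intro conjI ballI)
  show "Uc n r \<subseteq> Mn n" unfolding Uc_def by blast
  fix A assume A: "A \<in> Uc n r"
  show "\<exists>e>0. \<forall>B\<in>Mn n. (\<forall>j\<in>{1..n}. \<forall>k\<in>{1..n}. absv (B j k - A j k) < e) \<longrightarrow> B \<in> Uc n r"
  proof (intro exI[of _ "real r + 1"] conjI ballI impI)
    show "real r + 1 > 0" by simp
    fix B assume B: "B \<in> Mn n" "\<forall>j\<in>{1..n}. \<forall>k\<in>{1..n}. absv (B j k - A j k) < real r + 1"
    have "\<forall>j\<in>{1..n}. \<forall>k\<in>{1..n}. absv (B j k) < real r + 1"
    proof (intro ballI)
      fix j k assume jk: "j \<in> {1..n}" "k \<in> {1..n}"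
      have "absv (B j k) = absv ((B j k - A j k) + A j k)" by simp
      also have "\<dots> \<le> max (absv (B j k - A j k)) (absv (A j k))" by (rule ultra)
      also have "\<dots> < real r + 1"
      proof -
        have a: "absv (B j k - A j k) < real r + 1" using B(2) jk by blast
        have b: "absv (A j k) < real r + 1" using A jk unfolding Uc_def by blast
        show ?thesis using a b by simp
      qed
      finally show "absv (B j k) < real r + 1" .
    qed
    then show "B \<in> Uc n r" unfolding Uc_def using B(1) by blast
  qed
qed

lemma compact_bounded:
  assumes K: "compactin (T_plus_top absv n) K"
  shows "\<exists>M::nat. \<forall>A\<in>K. A \<in> T_plus n \<and> (\<forall>j\<in>{1..n}. \<forall>k\<in>{1..n}. absv (A j k) < real M)"
proof -
  have Ksub: "K \<subseteq> Mn n \<inter> T_plus n" using K unfolding compactin_def T_plus_top_def by (simp add: topspace_Mn)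
  let ?f = "\<lambda>r. Uc n r \<inter> T_plus n"
  have "\<forall>U\<in>range ?f. openin (T_plus_top absv n) U"
    unfolding T_plus_top_def openin_subtopology using open_Uc by blast
  moreover have "K \<subseteq> \<Union>(range ?f)"
  proof
    fix A assume A: "A \<in> K"
    define r where "r = nat \<lceil>mdist absv n A (\<lambda>j k. 0)\<rceil>"
    have "\<forall>j\<in>{1..n}. \<forall>k\<in>{1..n}. absv (A j k) < real r + 1"
    proof (intro ballI)
      fix j k assume jk: "j \<in> {1..n}" "k \<in> {1..n}"
      have "absv (A j k - 0) \<le> mdist absv n A (\<lambda>j k. 0)" using entry_le_mdist[OF jk, of A "\<lambda>j k. 0"] by simp
      also have "\<dots> \<le> real r" unfolding r_def by linarith
      finally show "absv (A j k) < real r + 1" by simp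
    qed
    then have "A \<in> ?f r" unfolding Uc_def using A Ksub by blast
    then show "A \<in> \<Union>(range ?f)" by blast
  qed
  ultimately obtain F where F: "finite F" "F \<subseteq> range ?f" "K \<subseteq> \<Union>F"
    using K unfolding compactin_def by meson
  obtain C where C: "finite C" "F = ?f ` C" using finite_subset_image[OF F(1) F(2)] by blast
  define M where "M = Max (insert 0 C) + 1"
  have "\<forall>A\<in>K. A \<in> T_plus n \<and> (\<forall>j\<in>{1..n}. \<forall>k\<in>{1..n}. absv (A j k) < real M)"
  proof
    fix A assume A: "A \<in> K"
    then obtain r where r: "r \<in> C" "A \<in> ?f r" using F(3) C(2) by blast
    have "r \<le> Max (insert 0 C)" using C(1) r(1) by simp
    then have rM: "real r + 1 \<le> real M" unfolding M_def by simp
    show "A \<in> T_plus n \<and> (\<forall>j\<in>{1..n}. \<forall>k\<in>{1..n}. absv (A j k) < real M)"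
      using r(2) rM unfolding Uc_def by force
  qed
  then show ?thesis by blast
qed

lemma pow_ge: "real M \<le> real p powr (real M * real d)" if "d \<ge> 1"
proof -
  have "real M < 2 ^ M" using less_exp[of M] by (metis of_nat_less_numeral_power_cancel_iff)
  also have "(2::real) ^ M \<le> real p ^ M" using p_gt1 by (intro power_mono) auto
  also have "real p ^ M = real p powr (real M)" using p_gt1 by (simp add: powr_realpow)
  also have "\<dots> \<le> real p powr (real M * real d)"
  proof (rule powr_mono)
    show "real M \<le> real M * real d" using mult_left_mono[of 1 "real d" "real M"] that by simp
    show "1 \<le> real p" using p_gt1 by simp
  qed
  finally show ?thesis by simp
qed


lemma lin_sub: "\<forall>\<alpha> \<beta>. 1 \<le> \<alpha> \<and> 1 \<le> \<beta> \<and> \<alpha> + \<beta> \<le> n - 1 \<longrightarrow>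
    (\<lambda>d. m * int d) (\<alpha> + \<beta>) \<le> (\<lambda>d. m * int d) \<alpha> + (\<lambda>d. m * int d) \<beta>"
  by (simp add: algebra_simps)

lemma lin_props:
  assumes n: "n \<ge> 2"
  shows "subgroup (delta ((of_nat p) powi m) ` T_plus_Zp absv n) (T_plus_group n)"
    "compactin (T_plus_top absv n) (delta ((of_nat p) powi m) ` T_plus_Zp absv n)"
    "openin (T_plus_top absv n) (delta ((of_nat p) powi m) ` T_plus_Zp absv n)"
proof -
  have n1: "n \<ge> 1" using n by simp
  show "subgroup (delta ((of_nat p) powi m) ` T_plus_Zp absv n) (T_plus_group n)"
    unfolding delta_img using SG_subgroup[OF lin_sub n1] by simp
  show "compactin (T_plus_top absv n) (delta ((of_nat p) powi m) ` T_plus_Zp absv n)"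
    unfolding delta_img using topo_part(3)[OF n1, of "\<lambda>d. m * int d"] by simp
  show "openin (T_plus_top absv n) (delta ((of_nat p) powi m) ` T_plus_Zp absv n)"
    unfolding delta_img using topo_part(4)[OF n1, of "\<lambda>d. m * int d"] by simp
qed

lemma large:
  assumes n: "n \<ge> 2"
  shows "has_large_compact_open_subgroups (T_plus_top absv n) (T_plus_group n :: 'a mat_fn monoid)"
  unfolding has_large_compact_open_subgroups_def
proof (intro allI impI)
  fix K assume K: "compactin (T_plus_top absv n) K"
  obtain M :: nat where M: "\<forall>A\<in>K. A \<in> T_plus n \<and> (\<forall>j\<in>{1..n}. \<forall>k\<in>{1..n}. absv (A j k) < real M)"
    using compact_bounded[OF K] by blast
  define m :: int where "m = - int M"
  have "K \<subseteq> delta ((of_nat p) powi m) ` T_plus_Zp absv n"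
    unfolding delta_img
  proof
    fix A assume A: "A \<in> K"
    have "\<forall>j k. 1 \<le> j \<and> j < k \<and> k \<le> n \<longrightarrow> A j k \<in> pZp p absv (m * int (k - j))"
    proof (intro allI impI)
      fix j k assume jk: "1 \<le> j \<and> j < k \<and> k \<le> n"
      then have "absv (A j k) < real M" using M A by auto
      also have "real M \<le> real p powr (real M * real (k - j))" by (rule pow_ge) (use jk in linarith)
      also have "real M * real (k - j) = - real_of_int (m * int (k - j))" unfolding m_def by simp
      finally show "A j k \<in> pZp p absv (m * int (k - j))" unfolding pZp_iff by simp
    qed
    then show "A \<in> {A \<in> T_plus n. \<forall>j k. 1 \<le> j \<and> j < k \<and> k \<le> n \<longrightarrow> A j k \<in> pZp p absv (m * int (k - j))}"
      using M A by blast
  qed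
  then show "\<exists>H. subgroup H (T_plus_group n) \<and> compactin (T_plus_top absv n) H \<and> openin (T_plus_top absv n) H \<and> K \<subseteq> H"
    using lin_props[OF n, of m] by blast
qed

end

theorem mainTheorem7:
  fixes p n :: nat and l :: "nat \<Rightarrow> int" and absv :: "'a::field_char_0 \<Rightarrow> real"
  assumes "prime p" and "n \<ge> 2" and "padic_field p absv"
    and "\<forall>\<alpha> \<beta>. 1 \<le> \<alpha> \<and> 1 \<le> \<beta> \<and> \<alpha> + \<beta> \<le> n - 1 \<longrightarrow> l (\<alpha> + \<beta>) \<le> l \<alpha> + l \<beta>"
  shows
    "is_subring_Tn n {B \<in> Tn_plus n. \<forall>j k. 1 \<le> j \<and> j < k \<and> k \<le> n \<longrightarrow> B j k \<in> pZp p absv (l (k - j))}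
     \<and> compactin (Tn_plus_top absv n)
         {B \<in> Tn_plus n. \<forall>j k. 1 \<le> j \<and> j < k \<and> k \<le> n \<longrightarrow> B j k \<in> pZp p absv (l (k - j))}
     \<and> openin (Tn_plus_top absv n)
         {B \<in> Tn_plus n. \<forall>j k. 1 \<le> j \<and> j < k \<and> k \<le> n \<longrightarrow> B j k \<in> pZp p absv (l (k - j))}
     \<and> subgroup {A \<in> T_plus n. \<forall>j k. 1 \<le> j \<and> j < k \<and> k \<le> n \<longrightarrow> A j k \<in> pZp p absv (l (k - j))}
         (T_plus_group n)
     \<and> compactin (T_plus_top absv n)
         {A \<in> T_plus n. \<forall>j k. 1 \<le> j \<and> j < k \<and> k \<le> n \<longrightarrow> A j k \<in> pZp p absv (l (k - j))}
     \<and> openin (T_plus_top absv n)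
         {A \<in> T_plus n. \<forall>j k. 1 \<le> j \<and> j < k \<and> k \<le> n \<longrightarrow> A j k \<in> pZp p absv (l (k - j))}
     \<and> (\<forall>m::int.
          {A \<in> T_plus n. Max {absv (A j k) powr (1 / real (k - j)) | j k. 1 \<le> j \<and> j < k \<and> k \<le> n}
                           \<le> real p powr (- real_of_int m)}
            = delta ((of_nat p) powi m) ` T_plus_Zp absv n
          \<and> subgroup (delta ((of_nat p) powi m) ` T_plus_Zp absv n) (T_plus_group n)
          \<and> compactin (T_plus_top absv n) (delta ((of_nat p) powi m) ` T_plus_Zp absv n)
          \<and> openin (T_plus_top absv n) (delta ((of_nat p) powi m) ` T_plus_Zp absv n))
     \<and> has_large_compact_open_subgroups (T_plus_top absv n) (T_plus_group n :: 'a mat_fn monoid)"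
proof -
  interpret P: pad p absv using assms(1,3) by (rule pad.intro)
  have n1: "n \<ge> 1" using assms(2) by simp
  show ?thesis
  proof (intro conjI allI)
    show "is_subring_Tn n {B \<in> Tn_plus n. \<forall>j k. 1 \<le> j \<and> j < k \<and> k \<le> n \<longrightarrow> B j k \<in> pZp p absv (l (k - j))}"
      by (rule P.SR_subring[OF assms(4)])
    show "compactin (Tn_plus_top absv n)
         {B \<in> Tn_plus n. \<forall>j k. 1 \<le> j \<and> j < k \<and> k \<le> n \<longrightarrow> B j k \<in> pZp p absv (l (k - j))}"
      by (rule P.topo_part(1)[OF n1])
    show "openin (Tn_plus_top absv n)
         {B \<in> Tn_plus n. \<forall>j k. 1 \<le> j \<and> j < k \<and> k \<le> n \<longrightarrow> B j k \<in> pZp p absv (l (k - j))}"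
      by (rule P.topo_part(2)[OF n1])
    show "subgroup {A \<in> T_plus n. \<forall>j k. 1 \<le> j \<and> j < k \<and> k \<le> n \<longrightarrow> A j k \<in> pZp p absv (l (k - j))}
         (T_plus_group n)"
      by (rule P.SG_subgroup[OF assms(4) n1])
    show "compactin (T_plus_top absv n)
         {A \<in> T_plus n. \<forall>j k. 1 \<le> j \<and> j < k \<and> k \<le> n \<longrightarrow> A j k \<in> pZp p absv (l (k - j))}"
      by (rule P.topo_part(3)[OF n1])
    show "openin (T_plus_top absv n)
         {A \<in> T_plus n. \<forall>j k. 1 \<le> j \<and> j < k \<and> k \<le> n \<longrightarrow> A j k \<in> pZp p absv (l (k - j))}"
      by (rule P.topo_part(4)[OF n1])
    fix m :: int
    show "{A \<in> T_plus n. Max {absv (A j k) powr (1 / real (k - j)) | j k. 1 \<le> j \<and> j < k \<and> k \<le> n}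
                           \<le> real p powr (- real_of_int m)}
            = delta ((of_nat p) powi m) ` T_plus_Zp absv n"
      by (rule P.max_set[OF assms(2)])
    show "subgroup (delta ((of_nat p) powi m) ` T_plus_Zp absv n) (T_plus_group n)"
      by (rule P.lin_props(1)[OF assms(2)])
    show "compactin (T_plus_top absv n) (delta ((of_nat p) powi m) ` T_plus_Zp absv n)"
      by (rule P.lin_props(2)[OF assms(2)])
    show "openin (T_plus_top absv n) (delta ((of_nat p) powi m) ` T_plus_Zp absv n)"
      by (rule P.lin_props(3)[OF assms(2)])
  next
    show "has_large_compact_open_subgroups (T_plus_top absv n) (T_plus_group n :: 'a mat_fn monoid)"
      by (rule P.large[OF assms(2)])
  qed
qed

end
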